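(* Let $(A,\mu,\alpha_A,\varepsilon)$ be a commutative color Hom-associative algebra and $(\mathfrak g,[\cdot,\cdot]_{\mathfrak g},\alpha_{\mathfrak g},\varepsilon)$ a color Hom-Lie algebra (same $\Gamma$ and $\varepsilon$). (i) The $\Gamma$-graded space $\mathfrak g\otimes A$ with $\alpha(x\otimes a)=\alpha_{\mathfrak g}(x)\otimes\alpha_A(a)$ and $[x\otimes a,y\otimes b]=\varepsilon(a,y)[x,y]_{\mathfrak g}\otimes\mu(a,b)$ (homogeneous $x,y\in\mathfrak g$, $a,b\in A$) is a color Hom-Lie algebra. (ii) If $B_A$ is an associative scalar product on $A$ and $B_{\mathfrak g}$ is an invariant scalar product on $\mathfrak g$, then $(\mathfrak g\otimes A,[\cdot,\cdot],\alpha,\varepsilon,B)$ is a quadratic color Hom-Lie algebra, where $B(x\otimes a,y\otimes b)=\varepsilon(a,y)B_{\mathfrak g}(x,y)B_A(a,b)$.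
   Context: $\mathbb K$ is a field of characteristic zero and $\Gamma$ an abelian group. A bicharacter is a map $\varepsilon:\Gamma\times\Gamma\to\mathbb K\setminus\{0\}$ with $\varepsilon(a,b)\varepsilon(b,a)=1$, $\varepsilon(a,b+c)=\varepsilon(a,b)\varepsilon(a,c)$, $\varepsilon(a+b,c)=\varepsilon(a,c)\varepsilon(b,c)$; for homogeneous elements $\varepsilon(x,y)=\varepsilon(\deg x,\deg y)$. The tensor product is graded by $(V\otimes W)_\delta=\sum_{\gamma+\gamma'=\delta}V_\gamma\otimes W_{\gamma'}$. A color Hom-Lie algebra $(\mathfrak g,[\cdot,\cdot],\alpha,\varepsilon)$: $\Gamma$-graded space, even bilinear bracket, even linear $\alpha$, with $[x,y]=-\varepsilon(x,y)[y,x]$ and $\varepsilon(z,x)[\alpha(x),[y,z]]+\varepsilon(x,y)[\alpha(y),[z,x]]+\varepsilon(y,z)[\alpha(z),[x,y]]=0$. A color Hom-associative algebra $(A,\mu,\alpha_A,\varepsilon)$: $\Gamma$-graded space with even bilinear $\mu$ and even linear $\alpha_A$, $\mu(\alpha_A(a),\mu(b,c))=\mu(\mu(a,b),\alpha_A(c))$; commutative means $\mu(a,b)=\varepsilon(a,b)\mu(b,a)$. An associative scalar product on $A$ is a nondegenerate $\varepsilon$-symmetric ($B_A(a,b)=\varepsilon(a,b)B_A(b,a)$) bilinear form with $B_A(\mu(a,b),c)=B_A(a,\mu(b,c))$ and $B_A(\alpha_A(a),b)=B_A(a,\alpha_A(b))$. An invariant scalar product on $\mathfrak g$ is a nondegenerate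 $\varepsilon$-symmetric bilinear form with $B_{\mathfrak g}([x,y],z)=B_{\mathfrak g}(x,[y,z])$ and $B_{\mathfrak g}(\alpha_{\mathfrak g}(x),y)=B_{\mathfrak g}(x,\alpha_{\mathfrak g}(y))$. A quadratic color Hom-Lie algebra is one equipped with such a form. *)

theory Defs
  imports Main "HOL.Vector_Spaces"
begin

text \<open>Vector spaces over a field 'k are given by scalar multiplications s :: 'k => 'v => 'v
  satisfying the library locale vector_space. Gradings by an abelian group 'c are given by
  families of subspaces V :: 'c => 'v set.\<close>

definition bicharacter :: "('c::ab_group_add \<Rightarrow> 'c \<Rightarrow> 'k::field) \<Rightarrow> bool" where
  "bicharacter eps \<longleftrightarrow>
     (\<forall>a b. eps a b \<noteq> 0) \<and>
     (\<forall>a b. eps a b * eps b a = 1) \<and>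
     (\<forall>a b c. eps a (b + c) = eps a b * eps a c) \<and>
     (\<forall>a b c. eps (a + b) c = eps a c * eps b c)"

definition bilinear_map ::
  "('k::field \<Rightarrow> 'u::ab_group_add \<Rightarrow> 'u) \<Rightarrow> ('k \<Rightarrow> 'v::ab_group_add \<Rightarrow> 'v) \<Rightarrow> ('k \<Rightarrow> 'w::ab_group_add \<Rightarrow> 'w)
     \<Rightarrow> ('u \<Rightarrow> 'v \<Rightarrow> 'w) \<Rightarrow> bool" where
  "bilinear_map s1 s2 s3 f \<longleftrightarrow>
     (\<forall>x. Vector_Spaces.linear s2 s3 (f x)) \<and> (\<forall>y. Vector_Spaces.linear s1 s3 (\<lambda>x. f x y))"

definition graded_space ::
  "('k::field \<Rightarrow> 'v::ab_group_add \<Rightarrow> 'v) \<Rightarrow> ('c \<Rightarrow> 'v set) \<Rightarrow> bool" where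
  "graded_space s V \<longleftrightarrow>
     vector_space s \<and> (\<forall>g. module.subspace s (V g)) \<and>
     (\<forall>v. \<exists>!f. finite {g. f g \<noteq> 0} \<and> (\<forall>g. f g \<in> V g) \<and> v = (\<Sum>g\<in>{g. f g \<noteq> 0}. f g))"

definition color_hom_lie ::
  "('k::field \<Rightarrow> 'v::ab_group_add \<Rightarrow> 'v) \<Rightarrow> ('c::ab_group_add \<Rightarrow> 'v set)
     \<Rightarrow> ('v \<Rightarrow> 'v \<Rightarrow> 'v) \<Rightarrow> ('v \<Rightarrow> 'v) \<Rightarrow> ('c \<Rightarrow> 'c \<Rightarrow> 'k) \<Rightarrow> bool" where
  "color_hom_lie s V br al eps \<longleftrightarrow>
     graded_space s V \<and> bilinear_map s s s br \<and> Vector_Spaces.linear s s al \<and>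
     (\<forall>g h x y. x \<in> V g \<longrightarrow> y \<in> V h \<longrightarrow> br x y \<in> V (g + h)) \<and>
     (\<forall>g x. x \<in> V g \<longrightarrow> al x \<in> V g) \<and>
     (\<forall>g h x y. x \<in> V g \<longrightarrow> y \<in> V h \<longrightarrow> br x y = - s (eps g h) (br y x)) \<and>
     (\<forall>g h k x y z. x \<in> V g \<longrightarrow> y \<in> V h \<longrightarrow> z \<in> V k \<longrightarrow>
        s (eps k g) (br (al x) (br y z)) + s (eps g h) (br (al y) (br z x))
          + s (eps h k) (br (al z) (br x y)) = 0)"

definition comm_color_hom_assoc ::
  "('k::field \<Rightarrow> 'v::ab_group_add \<Rightarrow> 'v) \<Rightarrow> ('c::ab_group_add \<Rightarrow> 'v set)
     \<Rightarrow> ('v \<Rightarrow> 'v \<Rightarrow> 'v) \<Rightarrow> ('v \<Rightarrow> 'v) \<Rightarrow> ('c \<Rightarrow> 'c \<Rightarrow> 'k) \<Rightarrow> bool" where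
  "comm_color_hom_assoc s V mu al eps \<longleftrightarrow>
     graded_space s V \<and> bilinear_map s s s mu \<and> Vector_Spaces.linear s s al \<and>
     (\<forall>g h x y. x \<in> V g \<longrightarrow> y \<in> V h \<longrightarrow> mu x y \<in> V (g + h)) \<and>
     (\<forall>g x. x \<in> V g \<longrightarrow> al x \<in> V g) \<and>
     (\<forall>a b c. mu (al a) (mu b c) = mu (mu a b) (al c)) \<and>
     (\<forall>g h a b. a \<in> V g \<longrightarrow> b \<in> V h \<longrightarrow> mu a b = s (eps g h) (mu b a))"

definition eps_scalar_form ::
  "('k::field \<Rightarrow> 'v::ab_group_add \<Rightarrow> 'v) \<Rightarrow> ('c::ab_group_add \<Rightarrow> 'v set)
     \<Rightarrow> ('c \<Rightarrow> 'c \<Rightarrow> 'k) \<Rightarrow> ('v \<Rightarrow> 'v \<Rightarrow> 'k) \<Rightarrow> bool" where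
  "eps_scalar_form s V eps B \<longleftrightarrow>
     bilinear_map s s (*) B \<and>
     (\<forall>x. (\<forall>y. B x y = 0) \<longrightarrow> x = 0) \<and>
     (\<forall>g h x y. x \<in> V g \<longrightarrow> y \<in> V h \<longrightarrow> B x y = eps g h * B y x)"

definition assoc_scalar_product ::
  "('k::field \<Rightarrow> 'v::ab_group_add \<Rightarrow> 'v) \<Rightarrow> ('c::ab_group_add \<Rightarrow> 'v set)
     \<Rightarrow> ('v \<Rightarrow> 'v \<Rightarrow> 'v) \<Rightarrow> ('v \<Rightarrow> 'v) \<Rightarrow> ('c \<Rightarrow> 'c \<Rightarrow> 'k) \<Rightarrow> ('v \<Rightarrow> 'v \<Rightarrow> 'k) \<Rightarrow> bool" where
  "assoc_scalar_product s V mu al eps B \<longleftrightarrow>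
     eps_scalar_form s V eps B \<and>
     (\<forall>a b c. B (mu a b) c = B a (mu b c)) \<and>
     (\<forall>a b. B (al a) b = B a (al b))"

definition invariant_scalar_product ::
  "('k::field \<Rightarrow> 'v::ab_group_add \<Rightarrow> 'v) \<Rightarrow> ('c::ab_group_add \<Rightarrow> 'v set)
     \<Rightarrow> ('v \<Rightarrow> 'v \<Rightarrow> 'v) \<Rightarrow> ('v \<Rightarrow> 'v) \<Rightarrow> ('c \<Rightarrow> 'c \<Rightarrow> 'k) \<Rightarrow> ('v \<Rightarrow> 'v \<Rightarrow> 'k) \<Rightarrow> bool" where
  "invariant_scalar_product s V br al eps B \<longleftrightarrow>
     eps_scalar_form s V eps B \<and>
     (\<forall>x y z. B (br x y) z = B x (br y z)) \<and>
     (\<forall>x y. B (al x) y = B x (al y))"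

definition quadratic_color_hom_lie ::
  "('k::field \<Rightarrow> 'v::ab_group_add \<Rightarrow> 'v) \<Rightarrow> ('c::ab_group_add \<Rightarrow> 'v set)
     \<Rightarrow> ('v \<Rightarrow> 'v \<Rightarrow> 'v) \<Rightarrow> ('v \<Rightarrow> 'v) \<Rightarrow> ('c \<Rightarrow> 'c \<Rightarrow> 'k) \<Rightarrow> ('v \<Rightarrow> 'v \<Rightarrow> 'k) \<Rightarrow> bool" where
  "quadratic_color_hom_lie s V br al eps B \<longleftrightarrow>
     color_hom_lie s V br al eps \<and> invariant_scalar_product s V br al eps B"

text \<open>tp exhibits T as a tensor product of the vector spaces G and A: tp is bilinear, its image
  spans T, and pure tensors of linearly independent families are linearly independent
  (equivalently: tensors of bases form a basis). Over a field this is equivalent to the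
  universal property.\<close>
definition tensor_product ::
  "('k::field \<Rightarrow> 'g::ab_group_add \<Rightarrow> 'g) \<Rightarrow> ('k \<Rightarrow> 'a::ab_group_add \<Rightarrow> 'a)
     \<Rightarrow> ('k \<Rightarrow> 't::ab_group_add \<Rightarrow> 't) \<Rightarrow> ('g \<Rightarrow> 'a \<Rightarrow> 't) \<Rightarrow> bool" where
  "tensor_product sg sa st tp \<longleftrightarrow>
     vector_space sg \<and> vector_space sa \<and> vector_space st \<and>
     bilinear_map sg sa st tp \<and>
     module.span st (range (case_prod tp)) = UNIV \<and>
     (\<forall>X Y. \<not> module.dependent sg X \<longrightarrow> \<not> module.dependent sa Y \<longrightarrow>
        inj_on (case_prod tp) (X \<times> Y) \<and> \<not> module.dependent st (case_prod tp ` (X \<times> Y)))"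

definition tensor_grading ::
  "('k::field \<Rightarrow> 't::ab_group_add \<Rightarrow> 't) \<Rightarrow> ('g \<Rightarrow> 'a \<Rightarrow> 't)
     \<Rightarrow> ('c::ab_group_add \<Rightarrow> 'g set) \<Rightarrow> ('c \<Rightarrow> 'a set) \<Rightarrow> 'c \<Rightarrow> 't set" where
  "tensor_grading st tp VG VA d =
     module.span st {tp x a | x a g h. g + h = d \<and> x \<in> VG g \<and> a \<in> VA h}"

definition tensor_bracket ::
  "('k::field \<Rightarrow> 't::ab_group_add \<Rightarrow> 't) \<Rightarrow> ('g \<Rightarrow> 'a \<Rightarrow> 't)
     \<Rightarrow> ('c::ab_group_add \<Rightarrow> 'g set) \<Rightarrow> ('c \<Rightarrow> 'a set) \<Rightarrow> ('c \<Rightarrow> 'c \<Rightarrow> 'k)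
     \<Rightarrow> ('g \<Rightarrow> 'g \<Rightarrow> 'g) \<Rightarrow> ('a \<Rightarrow> 'a \<Rightarrow> 'a) \<Rightarrow> ('t \<Rightarrow> 't \<Rightarrow> 't) \<Rightarrow> bool" where
  "tensor_bracket st tp VG VA eps brg mu br \<longleftrightarrow>
     bilinear_map st st st br \<and>
     (\<forall>g1 h1 g2 h2 x a y b. x \<in> VG g1 \<longrightarrow> a \<in> VA h1 \<longrightarrow> y \<in> VG g2 \<longrightarrow> b \<in> VA h2 \<longrightarrow>
        br (tp x a) (tp y b) = st (eps h1 g2) (tp (brg x y) (mu a b)))"

definition tensor_twist ::
  "('k::field \<Rightarrow> 't::ab_group_add \<Rightarrow> 't) \<Rightarrow> ('g \<Rightarrow> 'a \<Rightarrow> 't)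
     \<Rightarrow> ('g \<Rightarrow> 'g) \<Rightarrow> ('a \<Rightarrow> 'a) \<Rightarrow> ('t \<Rightarrow> 't) \<Rightarrow> bool" where
  "tensor_twist st tp alg alA al \<longleftrightarrow>
     Vector_Spaces.linear st st al \<and> (\<forall>x a. al (tp x a) = tp (alg x) (alA a))"

definition tensor_form ::
  "('k::field \<Rightarrow> 't::ab_group_add \<Rightarrow> 't) \<Rightarrow> ('g \<Rightarrow> 'a \<Rightarrow> 't)
     \<Rightarrow> ('c::ab_group_add \<Rightarrow> 'g set) \<Rightarrow> ('c \<Rightarrow> 'a set) \<Rightarrow> ('c \<Rightarrow> 'c \<Rightarrow> 'k)
     \<Rightarrow> ('g \<Rightarrow> 'g \<Rightarrow> 'k) \<Rightarrow> ('a \<Rightarrow> 'a \<Rightarrow> 'k) \<Rightarrow> ('t \<Rightarrow> 't \<Rightarrow> 'k) \<Rightarrow> bool" where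
  "tensor_form st tp VG VA eps BG BA B \<longleftrightarrow>
     bilinear_map st st (*) B \<and>
     (\<forall>g1 h1 g2 h2 x a y b. x \<in> VG g1 \<longrightarrow> a \<in> VA h1 \<longrightarrow> y \<in> VG g2 \<longrightarrow> b \<in> VA h2 \<longrightarrow>
        B (tp x a) (tp y b) = eps h1 g2 * BG x y * BA a b)"

end

theory Submission
  imports Defs
begin


lemma lin_vs1: "Vector_Spaces.linear s1 s2 f \<Longrightarrow> vector_space s1"
  by (simp add: linear_iff)
lemma lin_vs2: "Vector_Spaces.linear s1 s2 f \<Longrightarrow> vector_space s2"
  by (simp add: linear_iff)

lemma lin_add: "Vector_Spaces.linear s1 s2 f \<Longrightarrow> f (x + y) = f x + f y"
  by (simp add: linear_iff)
lemma lin_scale: "Vector_Spaces.linear s1 s2 f \<Longrightarrow> f (s1 c x) = s2 c (f x)"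
  by (simp add: linear_iff)
lemma lin_zero: "Vector_Spaces.linear s1 s2 f \<Longrightarrow> f 0 = 0"
  using module_hom.zero module_hom_iff_linear by blast
lemma lin_neg: "Vector_Spaces.linear s1 s2 f \<Longrightarrow> f (- x) = - f x"
  using module_hom.neg module_hom_iff_linear by blast
lemma lin_diff: "Vector_Spaces.linear s1 s2 f \<Longrightarrow> f (x - y) = f x - f y"
  using module_hom.diff module_hom_iff_linear by blast
lemma lin_sum: "Vector_Spaces.linear s1 s2 f \<Longrightarrow> f (sum g A) = (\<Sum>x\<in>A. f (g x))"
  using module_hom.sum module_hom_iff_linear by blast

lemma linI_comp: "Vector_Spaces.linear s1 s2 f \<Longrightarrow> Vector_Spaces.linear s0 s1 g
   \<Longrightarrow> Vector_Spaces.linear s0 s2 (\<lambda>x. f (g x))"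
  by (simp add: linear_iff)

lemma linI_scale: "Vector_Spaces.linear s1 s2 f \<Longrightarrow> Vector_Spaces.linear s1 s2 (\<lambda>x. s2 c (f x))"
proof -
  assume a: "Vector_Spaces.linear s1 s2 f"
  then interpret V2: vector_space s2 by (simp add: linear_iff)
  show ?thesis using a by (simp add: linear_iff V2.scale_left_commute V2.scale_right_distrib)
qed

lemma linI_add: "Vector_Spaces.linear s1 s2 f \<Longrightarrow> Vector_Spaces.linear s1 s2 g
   \<Longrightarrow> Vector_Spaces.linear s1 s2 (\<lambda>x. f x + g x)"
proof -
  assume a: "Vector_Spaces.linear s1 s2 f" "Vector_Spaces.linear s1 s2 g"
  then interpret V2: vector_space s2 by (simp add: linear_iff)
  show ?thesis using a by (simp add: linear_iff V2.scale_right_distrib algebra_simps)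
qed

lemma linI_neg: "Vector_Spaces.linear s1 s2 f \<Longrightarrow> Vector_Spaces.linear s1 s2 (\<lambda>x. - f x)"
proof -
  assume a: "Vector_Spaces.linear s1 s2 f"
  then interpret V2: vector_space s2 by (simp add: linear_iff)
  show ?thesis using a by (simp add: linear_iff V2.scale_minus_right)
qed

lemma linI_id: "vector_space s \<Longrightarrow> Vector_Spaces.linear s s (\<lambda>x. x)"
  by (simp add: linear_iff)

lemma linI_const0: "vector_space s1 \<Longrightarrow> vector_space s2 \<Longrightarrow> Vector_Spaces.linear s1 s2 (\<lambda>x. 0)"
proof -
  assume a: "vector_space s1" "vector_space s2"
  then interpret V2: vector_space s2 by simp
  show ?thesis using a by (simp add: linear_iff)
qed

lemma vs_field: "vector_space ((*) :: 'k::field \<Rightarrow> 'k \<Rightarrow> 'k)"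
  by unfold_locales (simp_all add: algebra_simps)

lemma bl_left: "bilinear_map s1 s2 s3 f \<Longrightarrow> Vector_Spaces.linear s1 s3 (\<lambda>x. f x y)"
  by (simp add: bilinear_map_def)
lemma bl_right: "bilinear_map s1 s2 s3 f \<Longrightarrow> Vector_Spaces.linear s2 s3 (\<lambda>y. f x y)"
  by (simp add: bilinear_map_def)

lemma bl_compL: "bilinear_map s1 s2 s3 f \<Longrightarrow> Vector_Spaces.linear s0 s1 g
   \<Longrightarrow> Vector_Spaces.linear s0 s3 (\<lambda>x. f (g x) y)"
  by (rule linI_comp[of s1 s3 "\<lambda>x. f x y"]) (simp_all add: bilinear_map_def)
lemma bl_compR: "bilinear_map s1 s2 s3 f \<Longrightarrow> Vector_Spaces.linear s0 s2 g
   \<Longrightarrow> Vector_Spaces.linear s0 s3 (\<lambda>x. f y (g x))"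
  by (rule linI_comp[of s2 s3 "\<lambda>x. f y x"]) (simp_all add: bilinear_map_def)

lemma lin_eq_span:
  assumes "Vector_Spaces.linear s1 s2 f" "Vector_Spaces.linear s1 s2 g" "x \<in> module.span s1 B"
    "\<And>b. b \<in> B \<Longrightarrow> f b = g b"
  shows "f x = g x"
proof -
  interpret vector_space_pair s1 s2 using assms(1) by (simp add: linear_iff vector_space_pair_def)
  show ?thesis using linear_eq_on[OF assms] .
qed

lemma lin_span_into:
  assumes "Vector_Spaces.linear s1 s2 f" "module.subspace s2 W" "x \<in> module.span s1 B"
    "\<And>b. b \<in> B \<Longrightarrow> f b \<in> W"
  shows "f x \<in> W"
proof -
  interpret linear s1 s2 f by fact
  have "vs1.subspace {x. f x \<in> W}" by (rule subspace_linear_preimage) fact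
  then show ?thesis using vs1.span_induct[OF assms(3), of "\<lambda>x. f x \<in> W"] assms(4) by auto
qed

lemma bil_span_into:
  assumes "bilinear_map s1 s2 s3 f" "module.subspace s3 W" "x \<in> module.span s1 X"
    "y \<in> module.span s2 Y" "\<And>a b. a \<in> X \<Longrightarrow> b \<in> Y \<Longrightarrow> f a b \<in> W"
  shows "f x y \<in> W"
proof -
  have "f a y \<in> W" if a: "a \<in> X" for a
    by (rule lin_span_into[OF bl_right[OF assms(1)] assms(2) assms(4)]) (use a assms(5) in auto)
  then show ?thesis
    by (intro lin_span_into[OF bl_left[OF assms(1)] assms(2) assms(3)])
qed

lemma lin_extend:
  assumes "vector_space s1" "vector_space s2" "\<not> module.dependent s1 X"
  shows "\<exists>f. Vector_Spaces.linear s1 s2 f \<and> (\<forall>x\<in>X. f x = F x)"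
proof -
  interpret vector_space_pair s1 s2 using assms by (simp add: vector_space_pair_def)
  show ?thesis using linear_independent_extend[OF assms(3)] by blast
qed

lemma bil_extend:
  assumes v1: "vector_space s1" and v2: "vector_space s2" and v3: "vector_space s3"
    and iX: "\<not> module.dependent s1 X" and iY: "\<not> module.dependent s2 Y"
  shows "\<exists>f. bilinear_map s1 s2 s3 f \<and> (\<forall>x\<in>X. \<forall>y\<in>Y. f x y = F x y)"
proof -
  interpret P: vector_space_pair s1 s3 using v1 v3 by (simp add: vector_space_pair_def)
  interpret Q: vector_space_pair s2 s3 using v2 v3 by (simp add: vector_space_pair_def)
  define f where "f u v = P.construct X (\<lambda>x. Q.construct Y (F x) v) u" for u v
  have lQ: "Vector_Spaces.linear s2 s3 (Q.construct Y (F x))" for x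
    by (rule Q.linear_construct[OF iY])
  have L: "Vector_Spaces.linear s1 s3 (\<lambda>u. f u v)" for v
    unfolding f_def by (rule P.linear_construct[OF iX])
  have R: "Vector_Spaces.linear s2 s3 (\<lambda>v. f u v)" for u
  proof -
    have "f u (v + w) = f u v + f u w" for v w
    proof -
      have "f u (v + w) = P.construct X (\<lambda>x. Q.construct Y (F x) v + Q.construct Y (F x) w) u"
        unfolding f_def by (simp add: lin_add[OF lQ])
      also have "\<dots> = f u v + f u w" unfolding f_def by (rule P.construct_add[OF iX])
      finally show ?thesis .
    qed
    moreover have "f u (s2 c v) = s3 c (f u v)" for c v
    proof -
      have "f u (s2 c v) = P.construct X (\<lambda>x. s3 c (Q.construct Y (F x) v)) u"
        unfolding f_def by (simp add: lin_scale[OF lQ])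
      also have "\<dots> = s3 c (f u v)" unfolding f_def by (rule P.construct_scale[OF iX])
      finally show ?thesis .
    qed
    ultimately show ?thesis using v2 v3 by (simp add: linear_iff)
  qed
  have "f x y = F x y" if "x \<in> X" "y \<in> Y" for x y
    unfolding f_def using that by (simp add: P.construct_basis[OF iX] Q.construct_basis[OF iY])
  moreover have "bilinear_map s1 s2 s3 f" using L R by (simp add: bilinear_map_def)
  ultimately show ?thesis by blast
qed

lemma multi2:
  assumes "x \<in> module.span s1 S1" "y \<in> module.span s2 S2"
    and "\<And>x y. x \<in> S1 \<Longrightarrow> y \<in> S2 \<Longrightarrow> P x y = Q x y"
    and "\<And>y. Vector_Spaces.linear s1 s (\<lambda>x. P x y)" "\<And>y. Vector_Spaces.linear s1 s (\<lambda>x. Q x y)"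
    and "\<And>x. Vector_Spaces.linear s2 s (\<lambda>y. P x y)" "\<And>x. Vector_Spaces.linear s2 s (\<lambda>y. Q x y)"
  shows "P x y = Q x y"
proof -
  have "P x b = Q x b" if "b \<in> S2" for b
    by (rule lin_eq_span[OF assms(4) assms(5) assms(1)]) (use assms(3) that in auto)
  then show ?thesis by (rule lin_eq_span[OF assms(6) assms(7) assms(2)])
qed

lemma multi3:
  assumes "x \<in> module.span s1 S1" "y \<in> module.span s2 S2" "z \<in> module.span s3 S3"
    and "\<And>x y z. x \<in> S1 \<Longrightarrow> y \<in> S2 \<Longrightarrow> z \<in> S3 \<Longrightarrow> P x y z = Q x y z"
    and "\<And>y z. Vector_Spaces.linear s1 s (\<lambda>x. P x y z)" "\<And>y z. Vector_Spaces.linear s1 s (\<lambda>x. Q x y z)"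
    and "\<And>x z. Vector_Spaces.linear s2 s (\<lambda>y. P x y z)" "\<And>x z. Vector_Spaces.linear s2 s (\<lambda>y. Q x y z)"
    and "\<And>x y. Vector_Spaces.linear s3 s (\<lambda>z. P x y z)" "\<And>x y. Vector_Spaces.linear s3 s (\<lambda>z. Q x y z)"
  shows "P x y z = Q x y z"
proof -
  have "P x y c = Q x y c" if "c \<in> S3" for c
    by (rule multi2[OF assms(1,2), of P' Q' for P' Q']) (use assms that in auto)
  then show ?thesis by (rule lin_eq_span[OF assms(9) assms(10) assms(3)])
qed

lemma multi4:
  assumes "x \<in> module.span s1 S1" "y \<in> module.span s2 S2" "z \<in> module.span s3 S3"
    "w \<in> module.span s4 S4"
    and "\<And>x y z w. x \<in> S1 \<Longrightarrow> y \<in> S2 \<Longrightarrow> z \<in> S3 \<Longrightarrow> w \<in> S4 \<Longrightarrow> P x y z w = Q x y z w"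
    and "\<And>y z w. Vector_Spaces.linear s1 s (\<lambda>x. P x y z w)" "\<And>y z w. Vector_Spaces.linear s1 s (\<lambda>x. Q x y z w)"
    and "\<And>x z w. Vector_Spaces.linear s2 s (\<lambda>y. P x y z w)" "\<And>x z w. Vector_Spaces.linear s2 s (\<lambda>y. Q x y z w)"
    and "\<And>x y w. Vector_Spaces.linear s3 s (\<lambda>z. P x y z w)" "\<And>x y w. Vector_Spaces.linear s3 s (\<lambda>z. Q x y z w)"
    and "\<And>x y z. Vector_Spaces.linear s4 s (\<lambda>w. P x y z w)" "\<And>x y z. Vector_Spaces.linear s4 s (\<lambda>w. Q x y z w)"
  shows "P x y z w = Q x y z w"
proof -
  have "P x y z c = Q x y z c" if "c \<in> S4" for c
    by (rule multi3[OF assms(1,2,3), of P' Q' for P' Q']) (use assms that in auto)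
  then show ?thesis by (rule lin_eq_span[OF assms(12) assms(13) assms(4)])
qed




lemma graded_vs: "graded_space s V \<Longrightarrow> vector_space s"
  by (simp add: graded_space_def)

lemma graded_sum_zero:
  assumes gr: "graded_space s V" and fin: "finite D" and z: "\<And>g. g \<in> D \<Longrightarrow> z g \<in> V g"
    and sum0: "sum z D = 0" and g: "g \<in> D"
  shows "z g = 0"
proof -
  interpret vector_space s using gr by (simp add: graded_space_def)
  have sub: "subspace (V g)" for g using gr by (simp add: graded_space_def)
  define f where "f g = (if g \<in> D then z g else 0)" for g
  have uniq: "\<exists>!f. finite {g. f g \<noteq> 0} \<and> (\<forall>g. f g \<in> V g) \<and> 0 = (\<Sum>g\<in>{g. f g \<noteq> 0}. f g)"
    using gr unfolding graded_space_def by blast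
  have P0: "finite {g. (\<lambda>_. 0) g \<noteq> 0} \<and> (\<forall>g. (\<lambda>_. 0) g \<in> V g) \<and> 0 = (\<Sum>g\<in>{g. (\<lambda>_. 0) g \<noteq> 0}. (\<lambda>_. 0) g)"
    using sub subspace_0 by auto
  have supp: "{g. f g \<noteq> 0} \<subseteq> D" by (auto simp: f_def split: if_splits)
  have "(\<Sum>g\<in>{g. f g \<noteq> 0}. f g) = (\<Sum>g\<in>D. f g)"
    by (rule sum.mono_neutral_left[OF fin supp]) auto
  also have "\<dots> = sum z D" by (simp add: f_def)
  finally have Pf: "finite {g. f g \<noteq> 0} \<and> (\<forall>g. f g \<in> V g) \<and> 0 = (\<Sum>g\<in>{g. f g \<noteq> 0}. f g)"
    using sum0 finite_subset[OF supp fin] z sub subspace_0 by (auto simp: f_def)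
  have "f = (\<lambda>_. 0)"
    using the1_equality[OF uniq, of f, OF Pf] the1_equality[OF uniq, of "\<lambda>_. 0", OF P0] by simp
  then show ?thesis using g by (metis f_def)
qed

lemma graded_disjoint:
  assumes gr: "graded_space s V" and "x \<in> V g" "x \<in> V h" "g \<noteq> h"
  shows "x = 0"
proof -
  interpret vector_space s using gr by (simp add: graded_space_def)
  have sub: "subspace (V g)" for g using gr by (simp add: graded_space_def)
  define z where "z k = (if k = g then x else - x)" for k
  have "z g = 0"
    by (rule graded_sum_zero[OF gr, of "{g,h}"]) (use assms sub subspace_neg in \<open>auto simp: z_def\<close>)
  then show ?thesis by (simp add: z_def)
qed

lemma graded_basis:
  assumes gr: "graded_space s V"
  obtains X deg where "\<not> module.dependent s X" "module.span s X = UNIV"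
    "\<And>x. x \<in> X \<Longrightarrow> x \<in> V (deg x)" "\<And>g. V g = module.span s {x\<in>X. deg x = g}"
proof -
  interpret vector_space s using gr by (simp add: graded_space_def)
  have sub: "subspace (V g)" for g using gr by (simp add: graded_space_def)
  have "\<forall>g. \<exists>B. B \<subseteq> V g \<and> independent B \<and> V g \<subseteq> span B"
  proof
    fix g show "\<exists>B. B \<subseteq> V g \<and> independent B \<and> V g \<subseteq> span B"
      by (rule maximal_independent_subset[of "V g"]) blast
  qed
  then have "\<exists>B. \<forall>g. B g \<subseteq> V g \<and> independent (B g) \<and> V g \<subseteq> span (B g)"
    by (rule choice)
  then obtain B where B0: "\<forall>g. B g \<subseteq> V g \<and> independent (B g) \<and> V g \<subseteq> span (B g)"
    by (elim exE)
  have B: "\<And>g. B g \<subseteq> V g" "\<And>g. independent (B g)" "\<And>g. V g \<subseteq> span (B g)"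
    using B0 by simp_all
  have Bspan: "span (B g) = V g" for g
    using B span_minimal[OF B(1) sub] by blast
  have Bnz: "x \<noteq> 0" if "x \<in> B g" for x g using B(2)[of g] dependent_zero that by blast
  have Bdisj: "g = h" if "x \<in> B g" "x \<in> B h" for x g h
    using graded_disjoint[OF gr, of x g h] B(1) Bnz that by blast
  define X where "X = (\<Union>g. B g)"
  define deg where "deg x = (SOME g. x \<in> B g)" for x
  have degB: "deg x = g" if "x \<in> B g" for x g
    unfolding deg_def by (rule someI2[of _ g]) (use that Bdisj in auto)
  have Xg: "{x\<in>X. deg x = g} = B g" for g
    using degB by (auto simp: X_def)
  have "span X = UNIV"
  proof -
    have "v \<in> span X" for v
    proof -
      have "\<exists>!f. finite {g. f g \<noteq> 0} \<and> (\<forall>g. f g \<in> V g) \<and> v = (\<Sum>g\<in>{g. f g \<noteq> 0}. f g)"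
        using conjunct2[OF conjunct2[OF gr[unfolded graded_space_def]]] by (rule spec)
      then obtain f where f0: "finite {g. f g \<noteq> 0} \<and> (\<forall>g. f g \<in> V g) \<and> v = (\<Sum>g\<in>{g. f g \<noteq> 0}. f g)"
        by (elim ex1E)
      then have f: "\<forall>g. f g \<in> V g" "v = (\<Sum>g\<in>{g. f g \<noteq> 0}. f g)" by simp_all
      have fX: "f g \<in> span X" for g
        using f(1) Bspan span_mono[of "B g" X] by (auto simp: X_def)
      show ?thesis unfolding f(2) by (rule span_sum) (rule fX)
    qed
    then show ?thesis by auto
  qed
  moreover have "independent X"
  proof
    assume "dependent X"
    then obtain T u v where T: "finite T" "T \<subseteq> X" "(\<Sum>v\<in>T. s (u v) v) = 0" "v \<in> T" "u v \<noteq> 0"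
      unfolding dependent_explicit by blast
    define z where "z g = (\<Sum>w\<in>{w\<in>T. deg w = g}. s (u w) w)" for g
    have zV: "z g \<in> V g" for g
    proof -
      have "{w\<in>T. deg w = g} \<subseteq> B g" using T(2) Xg by auto
      then show ?thesis unfolding z_def Bspan[symmetric]
        by (intro span_sum span_scale span_base) auto
    qed
    have "sum z (deg ` T) = (\<Sum>v\<in>T. s (u v) v)"
      unfolding z_def by (rule sum.image_gen[symmetric]) (rule T(1))
    then have z0: "z g = 0" if "g \<in> deg ` T" for g
      using graded_sum_zero[OF gr _ zV] T that by auto
    have "z (deg v) = 0" using z0 T(4) by auto
    moreover have "{w\<in>T. deg w = deg v} \<subseteq> B (deg v)" using T Xg by auto
    ultimately have "u v = 0"
      using independentD[OF B(2)[of "deg v"], of "{w\<in>T. deg w = deg v}" u v] T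
      by (auto simp: z_def)
    with T(5) show False by simp
  qed
  moreover have "x \<in> V (deg x)" if "x \<in> X" for x
    using that B(1) degB by (auto simp: X_def)
  moreover have "V g = span {x\<in>X. deg x = g}" for g using Xg Bspan by simp
  ultimately show ?thesis using that by blast
qed

lemma indep_spans_direct:
  assumes vs: "vector_space s" and ind: "\<not> module.dependent s X" and fin: "finite D"
    and z: "\<And>g. g \<in> D \<Longrightarrow> z g \<in> module.span s {x\<in>X. deg x = g}"
    and sum0: "sum z D = 0" and g0: "g0 \<in> D"
  shows "z g0 = 0"
proof -
  interpret vector_space s by fact
  let ?R = "representation X"
  have zX: "z g \<in> span X" if "g \<in> D" for g using z[OF that] span_mono[of "{x\<in>X. deg x = g}" X] by auto
  have Rz: "?R (z g) b = 0" if "g \<in> D" "deg b \<noteq> g" for g b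
  proof -
    have ind': "independent {x\<in>X. deg x = g}" using ind independent_mono by auto
    have "?R (z g) = representation {x\<in>X. deg x = g} (z g)"
      by (rule representation_extend[OF ind z[OF that(1)]]) auto
    then show ?thesis using representation_ne_zero[of "{x\<in>X. deg x = g}" "z g" b] that(2) by auto
  qed
  have "?R (z g0) b = 0" for b
  proof (cases "deg b = g0")
    case True
    have "0 = ?R (sum z D) b" using sum0 by (simp add: representation_zero)
    also have "\<dots> = (\<Sum>g\<in>D. ?R (z g) b)"
    proof -
      have "?R (sum z D) = (\<lambda>b. \<Sum>g\<in>D. ?R (z g) b)" by (rule representation_sum[OF ind zX])
      then show ?thesis by simp
    qed
    also have "\<dots> = ?R (z g0) b"
    proof -
      have "\<forall>i\<in>D - {g0}. ?R (z i) b = 0"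
      proof
        fix i assume i: "i \<in> D - {g0}"
        then have "deg b \<noteq> i" using True by auto
        then show "?R (z i) b = 0" using Rz i by blast
      qed
      then show ?thesis using sum.mono_neutral_right[OF fin, of "{g0}"] g0 by auto
    qed
    finally show ?thesis by simp
  next
    case False then show ?thesis using Rz[OF g0] by auto
  qed
  then show ?thesis using sum_nonzero_representation_eq[OF ind zX[OF g0]] by simp
qed

lemma graded_from_basis:
  assumes vs: "vector_space s" and ind: "\<not> module.dependent s X" and sp: "module.span s X = UNIV"
    and V: "\<And>g. V g = module.span s {x\<in>X. deg x = g}"
  shows "graded_space s V"
proof -
  interpret vector_space s by fact
  have ex: "\<exists>f. finite {g. f g \<noteq> 0} \<and> (\<forall>g. f g \<in> V g) \<and> v = (\<Sum>g\<in>{g. f g \<noteq> 0}. f g)" for v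
  proof -
    let ?R = "representation X v"
    define S where "S = {b. ?R b \<noteq> 0}"
    have finS: "finite S" using finite_representation S_def by simp
    have SX: "S \<subseteq> X" using representation_ne_zero S_def by auto
    define f where "f g = (\<Sum>b\<in>{b\<in>S. deg b = g}. s (?R b) b)" for g
    have fV: "f g \<in> V g" for g
      unfolding f_def V by (rule span_sum, rule span_scale, rule span_base) (use SX in auto)
    have supp: "{g. f g \<noteq> 0} \<subseteq> deg ` S"
    proof
      fix g assume g: "g \<in> {g. f g \<noteq> 0}"
      show "g \<in> deg ` S"
      proof (rule ccontr)
        assume "g \<notin> deg ` S"
        then have "{b\<in>S. deg b = g} = {}" by auto
        then have "f g = 0" unfolding f_def by (simp only: sum.empty)
        with g show False by simp
      qed
    qed
    have "v = (\<Sum>b\<in>S. s (?R b) b)"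
      using sum_nonzero_representation_eq[OF ind, of v] sp S_def by simp
    also have "\<dots> = (\<Sum>g\<in>deg ` S. f g)" unfolding f_def by (rule sum.image_gen[OF finS])
    also have "\<dots> = (\<Sum>g\<in>{g. f g \<noteq> 0}. f g)"
      by (rule sum.mono_neutral_right[OF finite_imageI[OF finS] supp]) auto
    finally show ?thesis using fV finite_subset[OF supp finite_imageI[OF finS]] by blast
  qed
  have un: "f = f'" if f: "finite {g. f g \<noteq> 0}" "\<forall>g. f g \<in> V g" "v = (\<Sum>g\<in>{g. f g \<noteq> 0}. f g)"
    and f': "finite {g. f' g \<noteq> 0}" "\<forall>g. f' g \<in> V g" "v = (\<Sum>g\<in>{g. f' g \<noteq> 0}. f' g)" for v f f'
  proof
    fix g
    define D where "D = {g. f g \<noteq> 0} \<union> {g. f' g \<noteq> 0}"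
    have finD: "finite D" using f f' D_def by simp
    have "v = (\<Sum>g\<in>D. f g)" using f(3) f(1) f'(1) by (auto intro!: sum.mono_neutral_left simp: D_def)
    moreover have "v = (\<Sum>g\<in>D. f' g)" using f'(3) f(1) f'(1) by (auto intro!: sum.mono_neutral_left simp: D_def)
    ultimately have s0: "(\<Sum>g\<in>D. f g - f' g) = 0" by (simp add: sum_subtractf)
    show "f g = f' g"
    proof (cases "g \<in> D")
      case True
      have "f g - f' g = 0"
      proof (rule indep_spans_direct[OF vs ind finD _ s0 True])
        fix h
        have "f h \<in> span {x\<in>X. deg x = h}" "f' h \<in> span {x\<in>X. deg x = h}"
          using f(2) f'(2) V by blast+
        then show "f h - f' h \<in> span {x\<in>X. deg x = h}" by (rule span_diff)
      qed
      then show ?thesis by simp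
    next
      case False then show ?thesis by (auto simp: D_def)
    qed
  qed
  have E: "\<exists>!f. finite {g. f g \<noteq> 0} \<and> (\<forall>g. f g \<in> V g) \<and> v = (\<Sum>g\<in>{g. f g \<noteq> 0}. f g)" for v
  proof -
    obtain f where f: "finite {g. f g \<noteq> 0} \<and> (\<forall>g. f g \<in> V g) \<and> v = (\<Sum>g\<in>{g. f g \<noteq> 0}. f g)"
      using ex by blast
    show ?thesis
    proof (rule ex1I[of _ f])
      show "finite {g. f g \<noteq> 0} \<and> (\<forall>g. f g \<in> V g) \<and> v = (\<Sum>g\<in>{g. f g \<noteq> 0}. f g)" by (rule f)
      fix f' assume "finite {g. f' g \<noteq> 0} \<and> (\<forall>g. f' g \<in> V g) \<and> v = (\<Sum>g\<in>{g. f' g \<noteq> 0}. f' g)"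
      then show "f' = f" using un[of f' v f] f by blast
    qed
  qed
  have S: "subspace (V g)" for g unfolding V by (rule subspace_span)
  show ?thesis unfolding graded_space_def by (intro conjI allI vs S E)
qed




lemma linI_mulK: "Vector_Spaces.linear s ((*) :: 'k::field \<Rightarrow> 'k \<Rightarrow> 'k) f
   \<Longrightarrow> Vector_Spaces.linear s (*) (\<lambda>x. c * f x * d)"
  by (simp add: linear_iff algebra_simps)

locale tsetup =
  fixes eps :: "'c::ab_group_add \<Rightarrow> 'c \<Rightarrow> 'k::field_char_0"
    and sA :: "'k \<Rightarrow> 'a::ab_group_add \<Rightarrow> 'a" and VA :: "'c \<Rightarrow> 'a set"
    and mu :: "'a \<Rightarrow> 'a \<Rightarrow> 'a" and alA :: "'a \<Rightarrow> 'a"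
    and sG :: "'k \<Rightarrow> 'g::ab_group_add \<Rightarrow> 'g" and VG :: "'c \<Rightarrow> 'g set"
    and brG :: "'g \<Rightarrow> 'g \<Rightarrow> 'g" and alG :: "'g \<Rightarrow> 'g"
    and sT :: "'k \<Rightarrow> 't::ab_group_add \<Rightarrow> 't" and tp :: "'g \<Rightarrow> 'a \<Rightarrow> 't"
    and XA :: "'a set" and degA :: "'a \<Rightarrow> 'c" and XG :: "'g set" and degG :: "'g \<Rightarrow> 'c"
  assumes bich: "bicharacter eps"
    and hA: "comm_color_hom_assoc sA VA mu alA eps"
    and hG: "color_hom_lie sG VG brG alG eps"
    and TP: "tensor_product sG sA sT tp"
    and XA_ind: "\<not> module.dependent sA XA" and XA_span: "module.span sA XA = UNIV"
    and XA_deg: "\<And>x. x \<in> XA \<Longrightarrow> x \<in> VA (degA x)"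
    and VA_span: "\<And>g. VA g = module.span sA {x\<in>XA. degA x = g}"
    and XG_ind: "\<not> module.dependent sG XG" and XG_span: "module.span sG XG = UNIV"
    and XG_deg: "\<And>x. x \<in> XG \<Longrightarrow> x \<in> VG (degG x)"
    and VG_span: "\<And>g. VG g = module.span sG {x\<in>XG. degG x = g}"
begin

lemmas hA' = hA[unfolded comm_color_hom_assoc_def]
lemmas hG' = hG[unfolded color_hom_lie_def]

lemma vsA: "vector_space sA" using conjunct1[OF hA'] by (simp only: graded_space_def)
lemma vsG: "vector_space sG" using conjunct1[OF hG'] by (simp only: graded_space_def)
lemma vsT: "vector_space sT" using TP by (simp add: tensor_product_def)

sublocale A: vector_space sA by (rule vsA)
sublocale G: vector_space sG by (rule vsG)
sublocale T: vector_space sT by (rule vsT)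

lemma tpb: "bilinear_map sG sA sT tp" using TP by (simp add: tensor_product_def)
lemma mub: "bilinear_map sA sA sA mu" by (rule conjunct1[OF conjunct2[OF hA']])
lemma brGb: "bilinear_map sG sG sG brG" by (rule conjunct1[OF conjunct2[OF hG']])
lemma alAl: "Vector_Spaces.linear sA sA alA" by (rule conjunct1[OF conjunct2[OF conjunct2[OF hA']]])
lemma alGl: "Vector_Spaces.linear sG sG alG" by (rule conjunct1[OF conjunct2[OF conjunct2[OF hG']]])
lemma mu_deg: "a \<in> VA g \<Longrightarrow> b \<in> VA h \<Longrightarrow> mu a b \<in> VA (g + h)"
  using conjunct1[OF conjunct2[OF conjunct2[OF conjunct2[OF hA']]]] by blast
lemma alA_deg: "a \<in> VA g \<Longrightarrow> alA a \<in> VA g"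
  using conjunct1[OF conjunct2[OF conjunct2[OF conjunct2[OF conjunct2[OF hA']]]]] by blast
lemma mu_assoc: "mu (alA a) (mu b c) = mu (mu a b) (alA c)"
  using conjunct1[OF conjunct2[OF conjunct2[OF conjunct2[OF conjunct2[OF conjunct2[OF hA']]]]]] by blast
lemma mu_comm: "a \<in> VA g \<Longrightarrow> b \<in> VA h \<Longrightarrow> mu a b = sA (eps g h) (mu b a)"
  using conjunct2[OF conjunct2[OF conjunct2[OF conjunct2[OF conjunct2[OF conjunct2[OF hA']]]]]] by blast
lemma br_deg: "x \<in> VG g \<Longrightarrow> y \<in> VG h \<Longrightarrow> brG x y \<in> VG (g + h)"
  using conjunct1[OF conjunct2[OF conjunct2[OF conjunct2[OF hG']]]] by blast
lemma alG_deg: "x \<in> VG g \<Longrightarrow> alG x \<in> VG g"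
  using conjunct1[OF conjunct2[OF conjunct2[OF conjunct2[OF conjunct2[OF hG']]]]] by blast
lemma brG_skew: "x \<in> VG g \<Longrightarrow> y \<in> VG h \<Longrightarrow> brG x y = - sG (eps g h) (brG y x)"
  using conjunct1[OF conjunct2[OF conjunct2[OF conjunct2[OF conjunct2[OF conjunct2[OF hG']]]]]] by blast
lemma brG_jac: "x \<in> VG g \<Longrightarrow> y \<in> VG h \<Longrightarrow> z \<in> VG k \<Longrightarrow>
    sG (eps k g) (brG (alG x) (brG y z)) + sG (eps g h) (brG (alG y) (brG z x))
          + sG (eps h k) (brG (alG z) (brG x y)) = 0"
  using conjunct2[OF conjunct2[OF conjunct2[OF conjunct2[OF conjunct2[OF conjunct2[OF hG']]]]]] by blast

lemma eps_nz: "eps a b \<noteq> 0" using bich by (simp add: bicharacter_def)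
lemma eps_inv: "eps a b * eps b a = 1" using bich by (simp add: bicharacter_def)
lemma eps_addR: "eps a (b + c) = eps a b * eps a c" using bich by (simp add: bicharacter_def)
lemma eps_addL: "eps (a + b) c = eps a c * eps b c" using bich by (simp add: bicharacter_def)
lemma eps_swap: "eps b a = inverse (eps a b)"
  using eps_inv[of a b] eps_nz[of a b] by (simp add: field_simps)

lemma VA_sub: "A.subspace (VA g)" using VA_span A.subspace_span by simp
lemma VG_sub: "G.subspace (VG g)" using VG_span G.subspace_span by simp

definition BT :: "'t set" where "BT = case_prod tp ` (XG \<times> XA)"

lemma BT_ind0: "inj_on (case_prod tp) (XG \<times> XA) \<and> \<not> T.dependent BT"
proof -
  have "\<forall>X Y. \<not> G.dependent X \<longrightarrow> \<not> A.dependent Y \<longrightarrow>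
        inj_on (case_prod tp) (X \<times> Y) \<and> \<not> T.dependent (case_prod tp ` (X \<times> Y))"
    using TP unfolding tensor_product_def by (elim conjE)
  then show ?thesis unfolding BT_def using XG_ind XA_ind by simp
qed
lemma BT_ind: "\<not> T.dependent BT" and tp_inj: "inj_on (case_prod tp) (XG \<times> XA)"
  using BT_ind0 by simp_all

definition pof :: "'t \<Rightarrow> 'g \<times> 'a" where "pof p = inv_into (XG \<times> XA) (case_prod tp) p"

lemma pof_tp: "e \<in> XG \<Longrightarrow> f \<in> XA \<Longrightarrow> pof (tp e f) = (e, f)"
  unfolding pof_def using inv_into_f_f[OF tp_inj, of "(e,f)"] by simp

lemma tp_eq_iff: "e \<in> XG \<Longrightarrow> f \<in> XA \<Longrightarrow> e' \<in> XG \<Longrightarrow> f' \<in> XA \<Longrightarrow>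
   tp e f = tp e' f' \<longleftrightarrow> e = e' \<and> f = f'"
  using tp_inj unfolding inj_on_def by auto

lemma BT_elim:
  assumes "p \<in> BT" obtains e f where "e \<in> XG" "f \<in> XA" "p = tp e f"
  using assms unfolding BT_def by auto

lemma BT_I: "e \<in> XG \<Longrightarrow> f \<in> XA \<Longrightarrow> tp e f \<in> BT"
  unfolding BT_def by auto

definition degT :: "'t \<Rightarrow> 'c" where
  "degT p = degG (fst (pof p)) + degA (snd (pof p))"

lemma degT_tp: "e \<in> XG \<Longrightarrow> f \<in> XA \<Longrightarrow> degT (tp e f) = degG e + degA f"
  by (simp add: degT_def pof_tp)

lemma tp_span: "x \<in> G.span X \<Longrightarrow> a \<in> A.span Y \<Longrightarrow> tp x a \<in> T.span (case_prod tp ` (X \<times> Y))"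
  by (rule bil_span_into[OF tpb T.subspace_span]) (auto intro: T.span_base)

lemma BT_span: "T.span BT = UNIV"
proof -
  have "range (case_prod tp) \<subseteq> T.span BT"
    using tp_span[of _ XG _ XA] XG_span XA_span unfolding BT_def by auto
  then have "T.span (range (case_prod tp)) \<subseteq> T.span BT"
    using T.span_minimal T.subspace_span by blast
  then show ?thesis using TP by (auto simp: tensor_product_def)
qed

abbreviation TG :: "'c \<Rightarrow> 't set" where "TG \<equiv> tensor_grading sT tp VG VA"

lemma TG_I: "x \<in> VG g \<Longrightarrow> a \<in> VA h \<Longrightarrow> g + h = d \<Longrightarrow> tp x a \<in> TG d"
  unfolding tensor_grading_def by (rule T.span_base) blast

lemma TG_sub: "T.subspace (TG d)" unfolding tensor_grading_def by (rule T.subspace_span)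

lemma BTd_elim:
  assumes "p \<in> {p\<in>BT. degT p = d}"
  obtains e f where "e \<in> XG" "f \<in> XA" "p = tp e f" "degG e + degA f = d"
proof -
  from assms have "p \<in> BT" "degT p = d" by simp_all
  then obtain e f where "e \<in> XG" "f \<in> XA" "p = tp e f" by (rule_tac BT_elim) auto
  with \<open>degT p = d\<close> that show ?thesis by (simp add: degT_tp)
qed

lemma tp_hom_span:
  assumes x: "x \<in> VG g" and a: "a \<in> VA h"
  shows "tp x a \<in> T.span {p\<in>BT. degT p = g + h}"
proof -
  have "tp x a \<in> T.span (case_prod tp ` ({e\<in>XG. degG e = g} \<times> {f\<in>XA. degA f = h}))"
    by (rule tp_span) (use x a VG_span VA_span in auto)
  moreover have "case_prod tp ` ({e\<in>XG. degG e = g} \<times> {f\<in>XA. degA f = h}) \<subseteq> {p\<in>BT. degT p = g + h}"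
    by (auto simp: degT_tp BT_I)
  ultimately show ?thesis using T.span_mono by blast
qed

lemma TG_eq: "TG d = T.span {p\<in>BT. degT p = d}"
proof
  show "TG d \<subseteq> T.span {p\<in>BT. degT p = d}"
    unfolding tensor_grading_def
    by (rule T.span_minimal[OF _ T.subspace_span]) (use tp_hom_span in blast)
  show "T.span {p\<in>BT. degT p = d} \<subseteq> TG d"
  proof (rule T.span_minimal[OF _ TG_sub], rule subsetI)
    fix p assume "p \<in> {p\<in>BT. degT p = d}"
    then obtain e f where "e \<in> XG" "f \<in> XA" "p = tp e f" "degG e + degA f = d"
      by (rule BTd_elim)
    then show "p \<in> TG d" using TG_I XG_deg XA_deg by blast
  qed
qed

lemma TG_graded: "graded_space sT TG"
  by (rule graded_from_basis[OF vsT BT_ind BT_span TG_eq])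

end



lemma linI_mulK2: "Vector_Spaces.linear s ((*) :: 'k::field \<Rightarrow> 'k \<Rightarrow> 'k) f
   \<Longrightarrow> Vector_Spaces.linear s (*) (\<lambda>x. c * f x)"
  by (simp add: linear_iff algebra_simps)

context tsetup begin

lemma formula4:
  fixes P Q :: "'g \<Rightarrow> 'a \<Rightarrow> 'g \<Rightarrow> 'a \<Rightarrow> 'z::ab_group_add"
  assumes "x \<in> VG g1" "a \<in> VA h1" "y \<in> VG g2" "b \<in> VA h2"
  and base: "\<And>x a y b. x \<in> XG \<Longrightarrow> degG x = g1 \<Longrightarrow> a \<in> XA \<Longrightarrow> degA a = h1 \<Longrightarrow>
      y \<in> XG \<Longrightarrow> degG y = g2 \<Longrightarrow> b \<in> XA \<Longrightarrow> degA b = h2 \<Longrightarrow> P x a y b = Q x a y b"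
  and "\<And>a y b. Vector_Spaces.linear sG s (\<lambda>x. P x a y b)" "\<And>a y b. Vector_Spaces.linear sG s (\<lambda>x. Q x a y b)"
    and "\<And>x y b. Vector_Spaces.linear sA s (\<lambda>a. P x a y b)" "\<And>x y b. Vector_Spaces.linear sA s (\<lambda>a. Q x a y b)"
    and "\<And>x a b. Vector_Spaces.linear sG s (\<lambda>y. P x a y b)" "\<And>x a b. Vector_Spaces.linear sG s (\<lambda>y. Q x a y b)"
    and "\<And>x a y. Vector_Spaces.linear sA s (\<lambda>b. P x a y b)" "\<And>x a y. Vector_Spaces.linear sA s (\<lambda>b. Q x a y b)"
  shows "P x a y b = Q x a y b"
  by (rule multi4[of x sG "{e\<in>XG. degG e = g1}" a sA "{f\<in>XA. degA f = h1}"
        y sG "{e\<in>XG. degG e = g2}" b sA "{f\<in>XA. degA f = h2}" P Q s])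
     (use assms VG_span VA_span in auto)

definition Fbr :: "'t \<Rightarrow> 't \<Rightarrow> 't" where
  "Fbr p q = (case pof p of (e, f) \<Rightarrow> case pof q of (e', f') \<Rightarrow>
      sT (eps (degA f) (degG e')) (tp (brG e e') (mu f f')))"

lemma br_exists: "\<exists>br. tensor_bracket sT tp VG VA eps brG mu br"
proof -
  obtain br0 where b0: "bilinear_map sT sT sT br0" and v0: "\<forall>p\<in>BT. \<forall>q\<in>BT. br0 p q = Fbr p q"
    using bil_extend[OF vsT vsT vsT BT_ind BT_ind, of Fbr] by blast
  have "br0 (tp x a) (tp y b) = sT (eps h1 g2) (tp (brG x y) (mu a b))"
    if "x \<in> VG g1" "a \<in> VA h1" "y \<in> VG g2" "b \<in> VA h2" for g1 h1 g2 h2 x a y b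
  proof (rule formula4[OF that])
    fix x a y b assume "x \<in> XG" "degG x = g1" "a \<in> XA" "degA a = h1" "y \<in> XG" "degG y = g2"
      "b \<in> XA" "degA b = h2"
    then show "br0 (tp x a) (tp y b) = sT (eps h1 g2) (tp (brG x y) (mu a b))"
      using v0 by (simp add: BT_I Fbr_def pof_tp)
  next
    show "Vector_Spaces.linear sG sT (\<lambda>x. br0 (tp x a) (tp y b))" for a y b
      by (rule bl_compL[OF b0 bl_left[OF tpb]])
    show "Vector_Spaces.linear sA sT (\<lambda>a. br0 (tp x a) (tp y b))" for x y b
      by (rule bl_compL[OF b0 bl_right[OF tpb]])
    show "Vector_Spaces.linear sG sT (\<lambda>y. br0 (tp x a) (tp y b))" for x a b
      by (rule bl_compR[OF b0 bl_left[OF tpb]])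
    show "Vector_Spaces.linear sA sT (\<lambda>b. br0 (tp x a) (tp y b))" for x a y
      by (rule bl_compR[OF b0 bl_right[OF tpb]])
    show "Vector_Spaces.linear sG sT (\<lambda>x. sT (eps h1 g2) (tp (brG x y) (mu a b)))" for a y b
      by (rule linI_scale[OF bl_compL[OF tpb bl_left[OF brGb]]])
    show "Vector_Spaces.linear sA sT (\<lambda>a. sT (eps h1 g2) (tp (brG x y) (mu a b)))" for x y b
      by (rule linI_scale[OF bl_compR[OF tpb bl_left[OF mub]]])
    show "Vector_Spaces.linear sG sT (\<lambda>y. sT (eps h1 g2) (tp (brG x y) (mu a b)))" for x a b
      by (rule linI_scale[OF bl_compL[OF tpb bl_right[OF brGb]]])
    show "Vector_Spaces.linear sA sT (\<lambda>b. sT (eps h1 g2) (tp (brG x y) (mu a b)))" for x a y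
      by (rule linI_scale[OF bl_compR[OF tpb bl_right[OF mub]]])
  qed
  then show ?thesis using b0 unfolding tensor_bracket_def by blast
qed

definition Fal :: "'t \<Rightarrow> 't" where
  "Fal p = (case pof p of (e, f) \<Rightarrow> tp (alG e) (alA f))"

lemma al_exists: "\<exists>al. tensor_twist sT tp alG alA al"
proof -
  obtain al0 where l0: "Vector_Spaces.linear sT sT al0" and v0: "\<forall>p\<in>BT. al0 p = Fal p"
    using lin_extend[OF vsT vsT BT_ind, of Fal] by blast
  have "al0 (tp x a) = tp (alG x) (alA a)" for x a
  proof (rule multi2[of x sG XG a sA XA "\<lambda>x a. al0 (tp x a)" "\<lambda>x a. tp (alG x) (alA a)" sT])
    show "x \<in> G.span XG" "a \<in> A.span XA" using XG_span XA_span by auto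
    show "al0 (tp x a) = tp (alG x) (alA a)" if "x \<in> XG" "a \<in> XA" for x a
      using v0 that by (simp add: BT_I Fal_def pof_tp)
    show "Vector_Spaces.linear sG sT (\<lambda>x. al0 (tp x a))" for a
      by (rule linI_comp[OF l0 bl_left[OF tpb]])
    show "Vector_Spaces.linear sA sT (\<lambda>a. al0 (tp x a))" for x
      by (rule linI_comp[OF l0 bl_right[OF tpb]])
    show "Vector_Spaces.linear sG sT (\<lambda>x. tp (alG x) (alA a))" for a
      by (rule bl_compL[OF tpb alGl])
    show "Vector_Spaces.linear sA sT (\<lambda>a. tp (alG x) (alA a))" for x
      by (rule bl_compR[OF tpb alAl])
  qed
  then show ?thesis using l0 unfolding tensor_twist_def by blast
qed

definition FB :: "('g \<Rightarrow> 'g \<Rightarrow> 'k) \<Rightarrow> ('a \<Rightarrow> 'a \<Rightarrow> 'k) \<Rightarrow> 't \<Rightarrow> 't \<Rightarrow> 'k" where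
  "FB BG BA p q = (case pof p of (e, f) \<Rightarrow> case pof q of (e', f') \<Rightarrow>
      eps (degA f) (degG e') * BG e e' * BA f f')"

lemma B_exists:
  assumes BGb: "bilinear_map sG sG (*) BG" and BAb: "bilinear_map sA sA (*) BA"
  shows "\<exists>B. tensor_form sT tp VG VA eps BG BA B"
proof -
  obtain B0 where b0: "bilinear_map sT sT (*) B0" and v0: "\<forall>p\<in>BT. \<forall>q\<in>BT. B0 p q = FB BG BA p q"
    using bil_extend[OF vsT vsT vs_field BT_ind BT_ind, of "FB BG BA"] by blast
  have "B0 (tp x a) (tp y b) = eps h1 g2 * BG x y * BA a b"
    if "x \<in> VG g1" "a \<in> VA h1" "y \<in> VG g2" "b \<in> VA h2" for g1 h1 g2 h2 x a y b
  proof (rule formula4[OF that])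
    fix x a y b assume "x \<in> XG" "degG x = g1" "a \<in> XA" "degA a = h1" "y \<in> XG" "degG y = g2"
      "b \<in> XA" "degA b = h2"
    then show "B0 (tp x a) (tp y b) = eps h1 g2 * BG x y * BA a b"
      using v0 by (simp add: BT_I FB_def pof_tp)
  next
    show "Vector_Spaces.linear sG (*) (\<lambda>x. B0 (tp x a) (tp y b))" for a y b
      by (rule bl_compL[OF b0 bl_left[OF tpb]])
    show "Vector_Spaces.linear sA (*) (\<lambda>a. B0 (tp x a) (tp y b))" for x y b
      by (rule bl_compL[OF b0 bl_right[OF tpb]])
    show "Vector_Spaces.linear sG (*) (\<lambda>y. B0 (tp x a) (tp y b))" for x a b
      by (rule bl_compR[OF b0 bl_left[OF tpb]])
    show "Vector_Spaces.linear sA (*) (\<lambda>b. B0 (tp x a) (tp y b))" for x a y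
      by (rule bl_compR[OF b0 bl_right[OF tpb]])
    show "Vector_Spaces.linear sG (*) (\<lambda>x. eps h1 g2 * BG x y * BA a b)" for a y b
      by (rule linI_mulK[OF bl_left[OF BGb]])
    show "Vector_Spaces.linear sA (*) (\<lambda>a. eps h1 g2 * BG x y * BA a b)" for x y b
      by (rule linI_mulK2[OF bl_left[OF BAb]])
    show "Vector_Spaces.linear sG (*) (\<lambda>y. eps h1 g2 * BG x y * BA a b)" for x a b
      by (rule linI_mulK[OF bl_right[OF BGb]])
    show "Vector_Spaces.linear sA (*) (\<lambda>b. eps h1 g2 * BG x y * BA a b)" for x a y
      by (rule linI_mulK2[OF bl_right[OF BAb]])
  qed
  then show ?thesis using b0 unfolding tensor_form_def by blast
qed

end



context tsetup begin

lemma tp_scL: "tp (sG c x) a = sT c (tp x a)" using lin_scale[OF bl_left[OF tpb]] .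
lemma tp_scR: "tp x (sA c a) = sT c (tp x a)" using lin_scale[OF bl_right[OF tpb]] .
lemma tp_negL: "tp (- x) a = - tp x a" using lin_neg[OF bl_left[OF tpb]] .
lemma tp_zeroL: "tp 0 a = 0" using lin_zero[OF bl_left[OF tpb]] .
lemma tp_addL: "tp (x + y) a = tp x a + tp y a" using lin_add[OF bl_left[OF tpb]] .

end

locale tsetup_br = tsetup +
  fixes br and al
  assumes tb: "tensor_bracket sT tp VG VA eps brG mu br"
    and tt: "tensor_twist sT tp alG alA al"
begin

lemma brb: "bilinear_map sT sT sT br" using tb by (simp add: tensor_bracket_def)
lemma br_hom: "x \<in> VG g1 \<Longrightarrow> a \<in> VA h1 \<Longrightarrow> y \<in> VG g2 \<Longrightarrow> b \<in> VA h2 \<Longrightarrow>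
   br (tp x a) (tp y b) = sT (eps h1 g2) (tp (brG x y) (mu a b))"
  using tb unfolding tensor_bracket_def by blast
lemma all: "Vector_Spaces.linear sT sT al" using tt by (simp add: tensor_twist_def)
lemma al_tp: "al (tp x a) = tp (alG x) (alA a)" using tt by (simp add: tensor_twist_def)

lemma br_TG: assumes "u \<in> TG g" "v \<in> TG h" shows "br u v \<in> TG (g + h)"
proof (rule bil_span_into[OF brb TG_sub])
  show "u \<in> T.span {p\<in>BT. degT p = g}" "v \<in> T.span {p\<in>BT. degT p = h}"
    using assms TG_eq by auto
  fix p q assume p: "p \<in> {p\<in>BT. degT p = g}" and q: "q \<in> {p\<in>BT. degT p = h}"
  obtain e f where ef: "e \<in> XG" "f \<in> XA" "p = tp e f" "degG e + degA f = g" using p by (rule BTd_elim)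
  obtain e' f' where ef': "e' \<in> XG" "f' \<in> XA" "q = tp e' f'" "degG e' + degA f' = h" using q by (rule BTd_elim)
  have "br p q = sT (eps (degA f) (degG e')) (tp (brG e e') (mu f f'))"
    using ef ef' by (simp add: br_hom[OF XG_deg XA_deg XG_deg XA_deg])
  moreover have "tp (brG e e') (mu f f') \<in> TG (g + h)"
    by (rule TG_I[OF br_deg[OF XG_deg XG_deg] mu_deg[OF XA_deg XA_deg]])
       (use ef ef' in \<open>auto simp: algebra_simps\<close>)
  ultimately show "br p q \<in> TG (g + h)" using T.subspace_scale[OF TG_sub] by simp
qed

lemma al_TG: assumes "u \<in> TG g" shows "al u \<in> TG g"
proof (rule lin_span_into[OF all TG_sub])
  show "u \<in> T.span {p\<in>BT. degT p = g}" using assms TG_eq by auto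
  fix p assume p: "p \<in> {p\<in>BT. degT p = g}"
  obtain e f where ef: "e \<in> XG" "f \<in> XA" "p = tp e f" "degG e + degA f = g" using p by (rule BTd_elim)
  show "al p \<in> TG g" using ef by (auto simp: al_tp intro!: TG_I alG_deg alA_deg XG_deg XA_deg)
qed

lemma br_skew: assumes "u \<in> TG g" "v \<in> TG h" shows "br u v = - sT (eps g h) (br v u)"
proof (rule multi2[of u sT "{p\<in>BT. degT p = g}" v sT "{p\<in>BT. degT p = h}" br
      "\<lambda>u v. - sT (eps g h) (br v u)" sT])
  show "u \<in> T.span {p\<in>BT. degT p = g}" "v \<in> T.span {p\<in>BT. degT p = h}"
    using assms TG_eq by auto
  show "Vector_Spaces.linear sT sT (\<lambda>x. br x y)" for y by (rule bl_left[OF brb])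
  show "Vector_Spaces.linear sT sT (\<lambda>y. br x y)" for x by (rule bl_right[OF brb])
  show "Vector_Spaces.linear sT sT (\<lambda>x. - sT (eps g h) (br y x))" for y
    by (rule linI_neg[OF linI_scale[OF bl_right[OF brb]]])
  show "Vector_Spaces.linear sT sT (\<lambda>y. - sT (eps g h) (br y x))" for x
    by (rule linI_neg[OF linI_scale[OF bl_left[OF brb]]])
  fix p q assume p: "p \<in> {p\<in>BT. degT p = g}" and q: "q \<in> {p\<in>BT. degT p = h}"
  obtain e f where ef: "e \<in> XG" "f \<in> XA" "p = tp e f" "degG e + degA f = g" using p by (rule BTd_elim)
  obtain e' f' where ef': "e' \<in> XG" "f' \<in> XA" "q = tp e' f'" "degG e' + degA f' = h" using q by (rule BTd_elim)
  define de where "de = degG e"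
  define fa where "fa = degA f"
  define de' where "de' = degG e'"
  define fa' where "fa' = degA f'"
  have xe: "e \<in> VG de" "e' \<in> VG de'" "f \<in> VA fa" "f' \<in> VA fa'"
    using ef ef' XG_deg XA_deg de_def de'_def fa_def fa'_def by auto
  have 1: "br p q = sT (eps fa de') (tp (brG e e') (mu f f'))"
    using ef ef' xe by (simp add: br_hom)
  have 2: "br q p = sT (eps fa' de) (tp (brG e' e) (mu f' f))"
    using ef ef' xe by (simp add: br_hom)
  have 3: "tp (brG e e') (mu f f') = - sT (eps de de' * eps fa fa') (tp (brG e' e) (mu f' f))"
    by (simp add: brG_skew[OF xe(1,2)] mu_comm[OF xe(3,4)] tp_negL tp_scL tp_scR)
  have sc: "eps fa de' * (eps de de' * eps fa fa') = eps (de + fa) (de' + fa') * eps fa' de"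
    by (simp add: eps_addL eps_addR eps_swap[of de fa'] eps_nz field_simps)
  have g: "g = de + fa" "h = de' + fa'" using ef ef' de_def fa_def de'_def fa'_def by auto
  show "br p q = - sT (eps g h) (br q p)"
    unfolding 1 2 3 g by (simp add: T.scale_minus_right sc)
qed

end



context tsetup_br begin

lemma br_scR: "br x (sT c y) = sT c (br x y)" using lin_scale[OF bl_right[OF brb]] .

lemma jac_base:
  assumes e: "e1 \<in> XG" "e2 \<in> XG" "e3 \<in> XG" and f: "f1 \<in> XA" "f2 \<in> XA" "f3 \<in> XA"
  defines "d1 \<equiv> degG e1" and "d2 \<equiv> degG e2" and "d3 \<equiv> degG e3"
    and "a1 \<equiv> degA f1" and "a2 \<equiv> degA f2" and "a3 \<equiv> degA f3"
  shows "sT (eps (d3 + a3) (d1 + a1)) (br (al (tp e1 f1)) (br (tp e2 f2) (tp e3 f3)))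
       + sT (eps (d1 + a1) (d2 + a2)) (br (al (tp e2 f2)) (br (tp e3 f3) (tp e1 f1)))
       + sT (eps (d2 + a2) (d3 + a3)) (br (al (tp e3 f3)) (br (tp e1 f1) (tp e2 f2))) = 0"
proof -
  have xe: "e1 \<in> VG d1" "e2 \<in> VG d2" "e3 \<in> VG d3" "f1 \<in> VA a1" "f2 \<in> VA a2" "f3 \<in> VA a3"
    using e f XG_deg XA_deg assms by auto
  have ae: "alG e1 \<in> VG d1" "alG e2 \<in> VG d2" "alG e3 \<in> VG d3"
    "alA f1 \<in> VA a1" "alA f2 \<in> VA a2" "alA f3 \<in> VA a3"
    using xe alG_deg alA_deg by auto
  define m where "m = mu (alA f1) (mu f2 f3)"
  define J1 where "J1 = brG (alG e1) (brG e2 e3)"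
  define J2 where "J2 = brG (alG e2) (brG e3 e1)"
  define J3 where "J3 = brG (alG e3) (brG e1 e2)"
  define L where "L = eps a3 d1 * eps a3 a1 * eps a2 d3 * eps a1 d2"
  have T1: "br (al (tp e1 f1)) (br (tp e2 f2) (tp e3 f3)) = sT (eps a2 d3 * eps a1 (d2 + d3)) (tp J1 m)"
    by (simp add: br_hom[OF xe(2,5,3,6)] al_tp br_scR br_hom[OF ae(1,4) br_deg[OF xe(2,3)] mu_deg[OF xe(5,6)]]
         J1_def m_def)
  have m2: "mu (alA f2) (mu f3 f1) = sA (eps (a2 + a3) a1) m"
  proof -
    have "mu (alA f2) (mu f3 f1) = mu (mu f2 f3) (alA f1)" by (rule mu_assoc)
    also have "\<dots> = sA (eps (a2 + a3) a1) (mu (alA f1) (mu f2 f3))"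
      by (rule mu_comm[OF mu_deg[OF xe(5,6)] ae(4)])
    finally show ?thesis unfolding m_def .
  qed
  have T2: "br (al (tp e2 f2)) (br (tp e3 f3) (tp e1 f1)) =
      sT (eps a3 d1 * (eps a2 (d3 + d1) * eps (a2 + a3) a1)) (tp J2 m)"
    by (simp add: br_hom[OF xe(3,6,1,4)] al_tp br_scR br_hom[OF ae(2,5) br_deg[OF xe(3,1)] mu_deg[OF xe(6,4)]]
         J2_def m2 tp_scR)
  have m3: "mu (alA f3) (mu f1 f2) = sA (eps a3 (a1 + a2)) m"
  proof -
    have "mu (alA f3) (mu f1 f2) = sA (eps a3 (a1 + a2)) (mu (mu f1 f2) (alA f3))"
      by (rule mu_comm[OF ae(6) mu_deg[OF xe(4,5)]])
    also have "mu (mu f1 f2) (alA f3) = mu (alA f1) (mu f2 f3)" by (rule mu_assoc[symmetric])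
    finally show ?thesis unfolding m_def .
  qed
  have T3: "br (al (tp e3 f3)) (br (tp e1 f1) (tp e2 f2)) =
      sT (eps a1 d2 * (eps a3 (d1 + d2) * eps a3 (a1 + a2))) (tp J3 m)"
    by (simp add: br_hom[OF xe(1,4,2,5)] al_tp br_scR br_hom[OF ae(3,6) br_deg[OF xe(1,2)] mu_deg[OF xe(4,5)]]
         J3_def m3 tp_scR)
  have s1: "eps (d3 + a3) (d1 + a1) * (eps a2 d3 * eps a1 (d2 + d3)) = L * eps d3 d1"
    unfolding L_def by (simp add: eps_addL eps_addR eps_swap[of a1 d3] eps_nz field_simps)
  have s2: "eps (d1 + a1) (d2 + a2) * (eps a3 d1 * (eps a2 (d3 + d1) * eps (a2 + a3) a1)) = L * eps d1 d2"
    unfolding L_def by (simp add: eps_addL eps_addR eps_swap[of d1 a2] eps_swap[of a1 a2] eps_nz field_simps)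
  have s3: "eps (d2 + a2) (d3 + a3) * (eps a1 d2 * (eps a3 (d1 + d2) * eps a3 (a1 + a2))) = L * eps d2 d3"
    unfolding L_def by (simp add: eps_addL eps_addR eps_swap[of d2 a3] eps_swap[of a2 a3] eps_nz field_simps)
  have J: "sG (eps d3 d1) J1 + sG (eps d1 d2) J2 + sG (eps d2 d3) J3 = 0"
    unfolding J1_def J2_def J3_def by (rule brG_jac[OF xe(1,2,3)])
  have "tp (sG (eps d3 d1) J1 + sG (eps d1 d2) J2 + sG (eps d2 d3) J3) m = 0"
    unfolding J by (rule tp_zeroL)
  then have "sT (eps d3 d1) (tp J1 m) + sT (eps d1 d2) (tp J2 m) + sT (eps d2 d3) (tp J3 m) = 0"
    by (simp add: tp_addL tp_scL)
  then have "sT L (sT (eps d3 d1) (tp J1 m) + sT (eps d1 d2) (tp J2 m) + sT (eps d2 d3) (tp J3 m)) = 0"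
    by simp
  then show ?thesis
    unfolding T1 T2 T3 T.scale_scale s1 s2 s3 by (simp add: T.scale_right_distrib)
qed

lemma br_jac:
  assumes "u \<in> TG g" "v \<in> TG h" "w \<in> TG k"
  shows "sT (eps k g) (br (al u) (br v w)) + sT (eps g h) (br (al v) (br w u))
          + sT (eps h k) (br (al w) (br u v)) = 0"
proof (rule multi3[of u sT "{p\<in>BT. degT p = g}" v sT "{p\<in>BT. degT p = h}" w sT "{p\<in>BT. degT p = k}"
      "\<lambda>u v w. sT (eps k g) (br (al u) (br v w)) + sT (eps g h) (br (al v) (br w u))
          + sT (eps h k) (br (al w) (br u v))" "\<lambda>u v w. 0" sT])
  show "u \<in> T.span {p\<in>BT. degT p = g}" "v \<in> T.span {p\<in>BT. degT p = h}" "w \<in> T.span {p\<in>BT. degT p = k}"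
    using assms TG_eq by auto
  show "Vector_Spaces.linear sT sT (\<lambda>x. 0)" by (rule linI_const0[OF vsT vsT])+
  show "Vector_Spaces.linear sT sT (\<lambda>x. 0)" by (rule linI_const0[OF vsT vsT])+
  show "Vector_Spaces.linear sT sT (\<lambda>x. 0)" by (rule linI_const0[OF vsT vsT])+
  show "Vector_Spaces.linear sT sT (\<lambda>u. sT (eps k g) (br (al u) (br v w)) + sT (eps g h) (br (al v) (br w u))
          + sT (eps h k) (br (al w) (br u v)))" for v w
    by (intro linI_add linI_scale bl_compL[OF brb all] bl_compR[OF brb bl_right[OF brb]]
          bl_compR[OF brb bl_left[OF brb]])
  show "Vector_Spaces.linear sT sT (\<lambda>v. sT (eps k g) (br (al u) (br v w)) + sT (eps g h) (br (al v) (br w u))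
          + sT (eps h k) (br (al w) (br u v)))" for u w
    by (intro linI_add linI_scale bl_compL[OF brb all] bl_compR[OF brb bl_right[OF brb]]
          bl_compR[OF brb bl_left[OF brb]])
  show "Vector_Spaces.linear sT sT (\<lambda>w. sT (eps k g) (br (al u) (br v w)) + sT (eps g h) (br (al v) (br w u))
          + sT (eps h k) (br (al w) (br u v)))" for u v
    by (intro linI_add linI_scale bl_compL[OF brb all] bl_compR[OF brb bl_right[OF brb]]
          bl_compR[OF brb bl_left[OF brb]])
  fix p q r assume p: "p \<in> {p\<in>BT. degT p = g}" and q: "q \<in> {p\<in>BT. degT p = h}" and r: "r \<in> {p\<in>BT. degT p = k}"
  obtain e1 f1 where 1: "e1 \<in> XG" "f1 \<in> XA" "p = tp e1 f1" "degG e1 + degA f1 = g" using p by (rule BTd_elim)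
  obtain e2 f2 where 2: "e2 \<in> XG" "f2 \<in> XA" "q = tp e2 f2" "degG e2 + degA f2 = h" using q by (rule BTd_elim)
  obtain e3 f3 where 3: "e3 \<in> XG" "f3 \<in> XA" "r = tp e3 f3" "degG e3 + degA f3 = k" using r by (rule BTd_elim)
  show "sT (eps k g) (br (al p) (br q r)) + sT (eps g h) (br (al q) (br r p))
          + sT (eps h k) (br (al r) (br p q)) = 0"
    using jac_base[OF 1(1) 2(1) 3(1) 1(2) 2(2) 3(2)] 1 2 3 by simp
qed

lemma color: "color_hom_lie sT TG br al eps"
  unfolding color_hom_lie_def
  using TG_graded brb all br_TG al_TG br_skew br_jac by blast

end



locale tsetup_B = tsetup_br +
  fixes BA and BG and B
  assumes asp: "assoc_scalar_product sA VA mu alA eps BA"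
    and isp: "invariant_scalar_product sG VG brG alG eps BG"
    and tf: "tensor_form sT tp VG VA eps BG BA B"
begin

lemma BAb: "bilinear_map sA sA (*) BA" using asp by (simp add: assoc_scalar_product_def eps_scalar_form_def)
lemma BA_nd: "(\<forall>y. BA x y = 0) \<Longrightarrow> x = 0"
  using asp unfolding assoc_scalar_product_def eps_scalar_form_def by blast
lemma BA_assoc: "BA (mu a b) c = BA a (mu b c)"
  using asp unfolding assoc_scalar_product_def by blast
lemma BA_al: "BA (alA a) b = BA a (alA b)"
  using asp unfolding assoc_scalar_product_def by blast
lemma BGb: "bilinear_map sG sG (*) BG" using isp by (simp add: invariant_scalar_product_def eps_scalar_form_def)
lemma BG_nd: "(\<forall>y. BG x y = 0) \<Longrightarrow> x = 0"
  using isp unfolding invariant_scalar_product_def eps_scalar_form_def by blast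
lemma BG_inv: "BG (brG x y) z = BG x (brG y z)"
  using isp unfolding invariant_scalar_product_def by blast
lemma BG_al: "BG (alG a) b = BG a (alG b)"
  using isp unfolding invariant_scalar_product_def by blast
lemma BA_sym: "x \<in> VA g \<Longrightarrow> y \<in> VA h \<Longrightarrow> BA x y = eps g h * BA y x"
  using asp unfolding assoc_scalar_product_def eps_scalar_form_def by blast
lemma BG_sym: "x \<in> VG g \<Longrightarrow> y \<in> VG h \<Longrightarrow> BG x y = eps g h * BG y x"
  using isp unfolding invariant_scalar_product_def eps_scalar_form_def by blast
lemma Bb: "bilinear_map sT sT (*) B" using tf by (simp add: tensor_form_def)
lemma B_hom: "x \<in> VG g1 \<Longrightarrow> a \<in> VA h1 \<Longrightarrow> y \<in> VG g2 \<Longrightarrow> b \<in> VA h2 \<Longrightarrow>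
   B (tp x a) (tp y b) = eps h1 g2 * BG x y * BA a b"
  using tf unfolding tensor_form_def by blast
lemma B_basis: "e \<in> XG \<Longrightarrow> f \<in> XA \<Longrightarrow> e' \<in> XG \<Longrightarrow> f' \<in> XA \<Longrightarrow>
   B (tp e f) (tp e' f') = eps (degA f) (degG e') * BG e e' * BA f f'"
  by (rule B_hom[OF XG_deg XA_deg XG_deg XA_deg])

lemma B_scL: "B (sT c x) y = c * B x y" using lin_scale[OF bl_left[OF Bb]] by simp
lemma B_scR: "B x (sT c y) = c * B x y" using lin_scale[OF bl_right[OF Bb]] by simp

lemma B_sym: assumes "u \<in> TG g" "v \<in> TG h" shows "B u v = eps g h * B v u"
proof (rule multi2[of u sT "{p\<in>BT. degT p = g}" v sT "{p\<in>BT. degT p = h}" B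
      "\<lambda>u v. eps g h * B v u" "(*)"])
  show "u \<in> T.span {p\<in>BT. degT p = g}" "v \<in> T.span {p\<in>BT. degT p = h}"
    using assms TG_eq by auto
  show "Vector_Spaces.linear sT (*) (\<lambda>x. B x y)" for y by (rule bl_left[OF Bb])
  show "Vector_Spaces.linear sT (*) (\<lambda>y. B x y)" for x by (rule bl_right[OF Bb])
  show "Vector_Spaces.linear sT (*) (\<lambda>x. eps g h * B y x)" for y
    by (rule linI_mulK2[OF bl_right[OF Bb]])
  show "Vector_Spaces.linear sT (*) (\<lambda>y. eps g h * B y x)" for x
    by (rule linI_mulK2[OF bl_left[OF Bb]])
  fix p q assume p: "p \<in> {p\<in>BT. degT p = g}" and q: "q \<in> {p\<in>BT. degT p = h}"
  obtain e f where ef: "e \<in> XG" "f \<in> XA" "p = tp e f" "degG e + degA f = g" using p by (rule BTd_elim)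
  obtain e' f' where ef': "e' \<in> XG" "f' \<in> XA" "q = tp e' f'" "degG e' + degA f' = h" using q by (rule BTd_elim)
  define de where "de = degG e"
  define fa where "fa = degA f"
  define de' where "de' = degG e'"
  define fa' where "fa' = degA f'"
  have xe: "e \<in> VG de" "e' \<in> VG de'" "f \<in> VA fa" "f' \<in> VA fa'"
    using ef ef' XG_deg XA_deg de_def de'_def fa_def fa'_def by auto
  have 1: "B p q = eps fa de' * BG e e' * BA f f'"
    using ef ef' by (simp add: B_basis de'_def fa_def)
  have 2: "B q p = eps fa' de * BG e' e * BA f' f"
    using ef ef' by (simp add: B_basis de_def fa'_def)
  have g: "g = de + fa" "h = de' + fa'" using ef ef' de_def fa_def de'_def fa'_def by auto
  show "B p q = eps g h * B q p"
    unfolding 1 2 g BG_sym[OF xe(1,2)] BA_sym[OF xe(3,4)]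
    by (simp add: eps_addL eps_addR eps_swap[of de fa'] eps_nz field_simps)
qed

lemma B_inv: "B (br x y) z = B x (br y z)"
proof (rule multi3[of x sT BT y sT BT z sT BT "\<lambda>x y z. B (br x y) z" "\<lambda>x y z. B x (br y z)" "(*)"])
  show "x \<in> T.span BT" "y \<in> T.span BT" "z \<in> T.span BT" using BT_span by auto
  show "Vector_Spaces.linear sT (*) (\<lambda>x. B (br x y) z)" for y z
    by (rule bl_compL[OF Bb bl_left[OF brb]])
  show "Vector_Spaces.linear sT (*) (\<lambda>x. B x (br y z))" for y z
    by (rule bl_left[OF Bb])
  show "Vector_Spaces.linear sT (*) (\<lambda>y. B (br x y) z)" for x z
    by (rule bl_compL[OF Bb bl_right[OF brb]])
  show "Vector_Spaces.linear sT (*) (\<lambda>y. B x (br y z))" for x z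
    by (rule bl_compR[OF Bb bl_left[OF brb]])
  show "Vector_Spaces.linear sT (*) (\<lambda>z. B (br x y) z)" for x y
    by (rule bl_right[OF Bb])
  show "Vector_Spaces.linear sT (*) (\<lambda>z. B x (br y z))" for x y
    by (rule bl_compR[OF Bb bl_right[OF brb]])
  fix p q r assume p: "p \<in> BT" and q: "q \<in> BT" and r: "r \<in> BT"
  obtain e1 f1 where 1: "e1 \<in> XG" "f1 \<in> XA" "p = tp e1 f1" using p by (rule BT_elim)
  obtain e2 f2 where 2: "e2 \<in> XG" "f2 \<in> XA" "q = tp e2 f2" using q by (rule BT_elim)
  obtain e3 f3 where 3: "e3 \<in> XG" "f3 \<in> XA" "r = tp e3 f3" using r by (rule BT_elim)
  have xe: "e1 \<in> VG (degG e1)" "e2 \<in> VG (degG e2)" "e3 \<in> VG (degG e3)"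
    "f1 \<in> VA (degA f1)" "f2 \<in> VA (degA f2)" "f3 \<in> VA (degA f3)"
    using 1 2 3 XG_deg XA_deg by auto
  have L: "B (br p q) r = eps (degA f1) (degG e2) * (eps (degA f1 + degA f2) (degG e3) *
      BG (brG e1 e2) e3 * BA (mu f1 f2) f3)"
    unfolding 1 2 3 br_hom[OF xe(1,4,2,5)] B_scL
    by (simp add: B_hom[OF br_deg[OF xe(1,2)] mu_deg[OF xe(4,5)] xe(3,6)])
  have R: "B p (br q r) = eps (degA f2) (degG e3) * (eps (degA f1) (degG e2 + degG e3) *
      BG e1 (brG e2 e3) * BA f1 (mu f2 f3))"
    unfolding 1 2 3 br_hom[OF xe(2,5,3,6)] B_scR
    by (simp add: B_hom[OF xe(1,4) br_deg[OF xe(2,3)] mu_deg[OF xe(5,6)]])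
  show "B (br p q) r = B p (br q r)"
    unfolding L R BG_inv BA_assoc by (simp add: eps_addL eps_addR mult_ac)
qed

lemma B_al: "B (al x) y = B x (al y)"
proof (rule multi2[of x sT BT y sT BT "\<lambda>x y. B (al x) y" "\<lambda>x y. B x (al y)" "(*)"])
  show "x \<in> T.span BT" "y \<in> T.span BT" using BT_span by auto
  show "Vector_Spaces.linear sT (*) (\<lambda>x. B (al x) y)" for y by (rule bl_compL[OF Bb all])
  show "Vector_Spaces.linear sT (*) (\<lambda>x. B x (al y))" for y by (rule bl_left[OF Bb])
  show "Vector_Spaces.linear sT (*) (\<lambda>y. B (al x) y)" for x by (rule bl_right[OF Bb])
  show "Vector_Spaces.linear sT (*) (\<lambda>y. B x (al y))" for x by (rule bl_compR[OF Bb all])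
  fix p q assume p: "p \<in> BT" and q: "q \<in> BT"
  obtain e1 f1 where 1: "e1 \<in> XG" "f1 \<in> XA" "p = tp e1 f1" using p by (rule BT_elim)
  obtain e2 f2 where 2: "e2 \<in> XG" "f2 \<in> XA" "q = tp e2 f2" using q by (rule BT_elim)
  have xe: "e1 \<in> VG (degG e1)" "e2 \<in> VG (degG e2)" "f1 \<in> VA (degA f1)" "f2 \<in> VA (degA f2)"
    using 1 2 XG_deg XA_deg by auto
  show "B (al p) q = B p (al q)"
    unfolding 1 2 al_tp
    by (simp add: B_hom[OF alG_deg[OF xe(1)] alA_deg[OF xe(3)] xe(2,4)]
        B_hom[OF xe(1,3) alG_deg[OF xe(2)] alA_deg[OF xe(4)]] BG_al BA_al)
qed

end



context tsetup_B begin

lemma B_nd: assumes t0: "\<forall>y. B t y = 0" shows "t = 0"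
proof -
  have coordA: "Vector_Spaces.linear sA (*) (\<lambda>x. A.representation XA x f)" for f
    by (rule A.linear_representation[OF XA_ind XA_span])
  have coordG: "Vector_Spaces.linear sG (*) (\<lambda>x. G.representation XG x e)" for e
    by (rule G.linear_representation[OF XG_ind XG_span])
  have coordT: "Vector_Spaces.linear sT (*) (\<lambda>x. T.representation BT x q)" for q
    by (rule T.linear_representation[OF BT_ind BT_span])
  have key: "T.representation BT t (tp e0 f0) = 0" if e0: "e0 \<in> XG" and f0: "f0 \<in> XA" for e0 f0
  proof -
    obtain \<pi> where \<pi>l: "Vector_Spaces.linear sT sG \<pi>"
      and \<pi>v: "\<forall>p\<in>BT. \<pi> p = (case pof p of (e, f) \<Rightarrow> if f = f0 then e else 0)"
      using lin_extend[OF vsT vsG BT_ind, of "\<lambda>p. case pof p of (e, f) \<Rightarrow> if f = f0 then e else 0"] by blast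
    have \<pi>tp: "\<pi> (tp e f) = (if f = f0 then e else 0)" if "e \<in> XG" "f \<in> XA" for e f
      using \<pi>v that by (simp add: BT_I pof_tp)
    have BG\<pi>: "BG (\<pi> t) y = 0" if y: "y \<in> XG" for y
    proof -
      obtain \<Phi> where \<Phi>l: "Vector_Spaces.linear sT sA \<Phi>"
        and \<Phi>v: "\<forall>p\<in>BT. \<Phi> p = (case pof p of (e, f) \<Rightarrow> sA (eps (degA f) (degG y) * BG e y) f)"
        using lin_extend[OF vsT vsA BT_ind, of "\<lambda>p. case pof p of (e, f) \<Rightarrow> sA (eps (degA f) (degG y) * BG e y) f"] by blast
      have \<Phi>tp: "\<Phi> (tp e f) = sA (eps (degA f) (degG y) * BG e y) f" if "e \<in> XG" "f \<in> XA" for e f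
        using \<Phi>v that by (simp add: BT_I pof_tp)
      have c1: "BA (\<Phi> u) b = B u (tp y b)" if b: "b \<in> XA" for u b
      proof (rule lin_eq_span[OF bl_compL[OF BAb \<Phi>l] bl_left[OF Bb], of u BT])
        show "u \<in> T.span BT" using BT_span by auto
        fix p assume "p \<in> BT"
        then obtain e f where ef: "e \<in> XG" "f \<in> XA" "p = tp e f" by (rule BT_elim)
        show "BA (\<Phi> p) b = B p (tp y b)"
          using ef b y by (simp add: \<Phi>tp B_basis lin_scale[OF bl_left[OF BAb]])
      qed
      have "BA (\<Phi> t) b = 0" for b
      proof (rule lin_eq_span[OF bl_right[OF BAb] linI_const0[OF vsA vs_field], of b XA])
        show "b \<in> A.span XA" using XA_span by auto
        show "BA (\<Phi> t) b' = 0" if "b' \<in> XA" for b' using c1[OF that] t0 by simp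
      qed
      then have \<Phi>0: "\<Phi> t = 0" using BA_nd by blast
      have c2: "A.representation XA (\<Phi> u) f0 = eps (degA f0) (degG y) * BG (\<pi> u) y" for u
      proof (rule lin_eq_span[OF linI_comp[OF coordA \<Phi>l] linI_mulK2[OF bl_compL[OF BGb \<pi>l]], of u BT])
        show "u \<in> T.span BT" using BT_span by auto
        fix p assume "p \<in> BT"
        then obtain e f where ef: "e \<in> XG" "f \<in> XA" "p = tp e f" by (rule BT_elim)
        have r: "A.representation XA (sA c f) f0 = c * (if f0 = f then 1 else 0)" for c
          using A.representation_scale[OF XA_ind, of f c] A.representation_basis[OF XA_ind ef(2)]
            XA_span by simp
        show "A.representation XA (\<Phi> p) f0 = eps (degA f0) (degG y) * BG (\<pi> p) y"
          using ef by (simp add: \<Phi>tp \<pi>tp r lin_zero[OF bl_left[OF BGb]])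
      qed
      have "eps (degA f0) (degG y) * BG (\<pi> t) y = 0"
        using c2[of t] \<Phi>0 A.representation_zero by simp
      then show ?thesis using eps_nz by simp
    qed
    have "BG (\<pi> t) y = 0" for y
    proof (rule lin_eq_span[OF bl_right[OF BGb] linI_const0[OF vsG vs_field], of y XG])
      show "y \<in> G.span XG" using XG_span by auto
      show "BG (\<pi> t) y' = 0" if "y' \<in> XG" for y' using BG\<pi>[OF that] by simp
    qed
    then have \<pi>0: "\<pi> t = 0" using BG_nd by blast
    have c3: "G.representation XG (\<pi> u) e0 = T.representation BT u (tp e0 f0)" for u
    proof (rule lin_eq_span[OF linI_comp[OF coordG \<pi>l] coordT, of u BT])
      show "u \<in> T.span BT" using BT_span by auto
      fix p assume "p \<in> BT"
      then obtain e f where ef: "e \<in> XG" "f \<in> XA" "p = tp e f" by (rule BT_elim)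
      have rT: "T.representation BT (tp e f) (tp e0 f0) = (if tp e0 f0 = tp e f then 1 else 0)"
        using T.representation_basis[OF BT_ind BT_I[OF ef(1,2)]] by simp
      show "G.representation XG (\<pi> p) e0 = T.representation BT p (tp e0 f0)"
        using ef e0 f0
        by (auto simp: rT \<pi>tp tp_eq_iff G.representation_basis[OF XG_ind] G.representation_zero)
    qed
    show ?thesis using c3[of t] \<pi>0 G.representation_zero by simp
  qed
  have "T.representation BT t q = 0" for q
  proof (cases "q \<in> BT")
    case True
    then obtain e f where "e \<in> XG" "f \<in> XA" "q = tp e f" by (rule BT_elim)
    then show ?thesis using key by simp
  next
    case False then show ?thesis using T.representation_ne_zero by blast
  qed
  then show ?thesis using T.sum_nonzero_representation_eq[OF BT_ind, of t] BT_span by simp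
qed

lemma quadratic: "quadratic_color_hom_lie sT TG br al eps B"
  unfolding quadratic_color_hom_lie_def invariant_scalar_product_def eps_scalar_form_def
  using color Bb B_nd B_sym B_inv B_al by blast

end


theorem mainTheorem6:
  fixes eps :: "'c::ab_group_add \<Rightarrow> 'c \<Rightarrow> 'k::field_char_0"
    and sA :: "'k \<Rightarrow> 'a::ab_group_add \<Rightarrow> 'a" and VA :: "'c \<Rightarrow> 'a set"
    and mu :: "'a \<Rightarrow> 'a \<Rightarrow> 'a" and alA :: "'a \<Rightarrow> 'a"
    and sG :: "'k \<Rightarrow> 'g::ab_group_add \<Rightarrow> 'g" and VG :: "'c \<Rightarrow> 'g set"
    and brG :: "'g \<Rightarrow> 'g \<Rightarrow> 'g" and alG :: "'g \<Rightarrow> 'g"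
    and sT :: "'k \<Rightarrow> 't::ab_group_add \<Rightarrow> 't" and tp :: "'g \<Rightarrow> 'a \<Rightarrow> 't"
  assumes "bicharacter eps"
    and "comm_color_hom_assoc sA VA mu alA eps"
    and "color_hom_lie sG VG brG alG eps"
    and "tensor_product sG sA sT tp"
  shows "(\<exists>br al. tensor_bracket sT tp VG VA eps brG mu br \<and> tensor_twist sT tp alG alA al)
       \<and> (\<forall>br al. tensor_bracket sT tp VG VA eps brG mu br \<and> tensor_twist sT tp alG alA al
             \<longrightarrow> color_hom_lie sT (tensor_grading sT tp VG VA) br al eps)
       \<and> (\<forall>BA BG. assoc_scalar_product sA VA mu alA eps BA
             \<and> invariant_scalar_product sG VG brG alG eps BG
             \<longrightarrow> (\<exists>B. tensor_form sT tp VG VA eps BG BA B)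
               \<and> (\<forall>br al B. tensor_bracket sT tp VG VA eps brG mu br
                     \<and> tensor_twist sT tp alG alA al \<and> tensor_form sT tp VG VA eps BG BA B
                   \<longrightarrow> quadratic_color_hom_lie sT (tensor_grading sT tp VG VA) br al eps B))"
proof -
  have gA: "graded_space sA VA"
    using conjunct1[OF assms(2)[unfolded comm_color_hom_assoc_def]] .
  have gG: "graded_space sG VG"
    using conjunct1[OF assms(3)[unfolded color_hom_lie_def]] .
  obtain XA degA where XA: "\<not> module.dependent sA XA" "module.span sA XA = UNIV"
    "\<And>x. x \<in> XA \<Longrightarrow> x \<in> VA (degA x)" "\<And>g. VA g = module.span sA {x\<in>XA. degA x = g}"
    using graded_basis[OF gA] by metis
  obtain XG degG where XG: "\<not> module.dependent sG XG" "module.span sG XG = UNIV"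
    "\<And>x. x \<in> XG \<Longrightarrow> x \<in> VG (degG x)" "\<And>g. VG g = module.span sG {x\<in>XG. degG x = g}"
    using graded_basis[OF gG] by metis
  interpret S: tsetup eps sA VA mu alA sG VG brG alG sT tp XA degA XG degG
    by (rule tsetup.intro) (rule assms XA XG | assumption)+
  have P1: "\<exists>br al. tensor_bracket sT tp VG VA eps brG mu br \<and> tensor_twist sT tp alG alA al"
    using S.br_exists S.al_exists by blast
  have P2: "color_hom_lie sT (tensor_grading sT tp VG VA) br al eps"
    if "tensor_bracket sT tp VG VA eps brG mu br \<and> tensor_twist sT tp alG alA al" for br al
  proof -
    interpret S2: tsetup_br eps sA VA mu alA sG VG brG alG sT tp XA degA XG degG br al
      using that by (intro tsetup_br.intro S.tsetup_axioms tsetup_br_axioms.intro) auto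
    show ?thesis by (rule S2.color)
  qed
  have P3: "(\<exists>B. tensor_form sT tp VG VA eps BG BA B)
               \<and> (\<forall>br al B. tensor_bracket sT tp VG VA eps brG mu br
                     \<and> tensor_twist sT tp alG alA al \<and> tensor_form sT tp VG VA eps BG BA B
                   \<longrightarrow> quadratic_color_hom_lie sT (tensor_grading sT tp VG VA) br al eps B)"
    if H: "assoc_scalar_product sA VA mu alA eps BA \<and> invariant_scalar_product sG VG brG alG eps BG"
    for BA BG
  proof (intro conjI allI impI)
    have "bilinear_map sA sA (*) BA" "bilinear_map sG sG (*) BG"
      using H by (simp_all add: assoc_scalar_product_def invariant_scalar_product_def eps_scalar_form_def)
    then show "\<exists>B. tensor_form sT tp VG VA eps BG BA B" by (rule S.B_exists[rotated])
  next
    fix br al B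
    assume H2: "tensor_bracket sT tp VG VA eps brG mu br
                     \<and> tensor_twist sT tp alG alA al \<and> tensor_form sT tp VG VA eps BG BA B"
    interpret S3: tsetup_B eps sA VA mu alA sG VG brG alG sT tp XA degA XG degG br al BA BG B
      using H H2 by (intro tsetup_B.intro tsetup_br.intro S.tsetup_axioms tsetup_br_axioms.intro
          tsetup_B_axioms.intro) auto
    show "quadratic_color_hom_lie sT (tensor_grading sT tp VG VA) br al eps B" by (rule S3.quadratic)
  qed
  show ?thesis using P1 P2 P3 by blast
qed

end
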